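(* Let $1\le p\le\infty$ and $f,f',b,b'\in\mathcal{L}^p(I)$. Then $$\|(f*_Tb)-(f'*_Tb')\|_p\le\frac{1}{1-\Lambda}\left(\|f-f'\|_p+\Lambda\|b-b'\|_p\right).$$ For $0<p<1$ the same inequality holds with $\|g-h\|_p$ replaced by $d_p(g,h)=\int_I|g-h|^p\,dx$ and $\Lambda$ replaced by $\Lambda^p$.
   Context: Let $N\ge 2$, $I=[x_0,x_N]\subset\mathbb{R}$ and $\Delta: x_0<x_1<\dots<x_N$ a partition of $I$. For $n=1,\dots,N$ let $L_n(x)=a_nx+b_n$ be the affine map with $L_n(x_0)=x_{n-1}$, $L_n(x_N)=x_n$; set $I_1=[x_0,x_1]$, $I_n=(x_{n-1},x_n]$ for $n\ge 2$. Let $\alpha=(\alpha_1,\dots,\alpha_N)\in(\mathcal{L}^\infty(I))^N$ with $\Lambda:=\operatorname{ess\,sup}\{|\alpha_n(x)|:x\in I,\ n=1,\dots,N\}<1$. For $0<p\le\infty$ and $f,b\in\mathcal{L}^p(I)$, the fractal convolution $f*_Tb$ is the unique fixed point in $\mathcal{L}^p(I)$ of the contraction $Tg(x):=f(x)+\alpha_n(L_n^{-1}(x))\,(g-b)(L_n^{-1}(x))$, $x\in I_n$, $n=1,\dots,N$. The partition, the maps $L_n$ and $\alpha$ are fixed. *)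

theory Defs
  imports "HOL-Analysis.Analysis" "HOL-Probability.Essential_Supremum"
begin

definition Ival :: "(nat \<Rightarrow> real) \<Rightarrow> nat \<Rightarrow> real set" where
  "Ival x N = {x 0 .. x N}"

definition Iseg :: "(nat \<Rightarrow> real) \<Rightarrow> nat \<Rightarrow> real set" where
  "Iseg x n = (if n = 1 then {x 0 .. x 1} else {x (n - 1) <.. x n})"

definition Lmap :: "(nat \<Rightarrow> real) \<Rightarrow> nat \<Rightarrow> nat \<Rightarrow> real \<Rightarrow> real" where
  "Lmap x N n t = x (n - 1) + (x n - x (n - 1)) / (x N - x 0) * (t - x 0)"

definition Linv :: "(nat \<Rightarrow> real) \<Rightarrow> nat \<Rightarrow> nat \<Rightarrow> real \<Rightarrow> real" where
  "Linv x N n t = x 0 + (x N - x 0) / (x n - x (n - 1)) * (t - x (n - 1))"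

definition Lam :: "(nat \<Rightarrow> real) \<Rightarrow> nat \<Rightarrow> (nat \<Rightarrow> real \<Rightarrow> real) \<Rightarrow> ereal" where
  "Lam x N \<alpha> = esssup (lebesgue_on (Ival x N)) (\<lambda>t. Max ((\<lambda>n. ereal \<bar>\<alpha> n t\<bar>) ` {1..N}))"

definition memLp :: "real set \<Rightarrow> ennreal \<Rightarrow> (real \<Rightarrow> real) \<Rightarrow> bool" where
  "memLp I p g \<longleftrightarrow> g \<in> borel_measurable (lebesgue_on I) \<and>
     (if p = \<infinity> then esssup (lebesgue_on I) (\<lambda>t. ereal \<bar>g t\<bar>) < \<infinity>
      else integrable (lebesgue_on I) (\<lambda>t. \<bar>g t\<bar> powr enn2real p))"

definition Lp_norm :: "real set \<Rightarrow> ennreal \<Rightarrow> (real \<Rightarrow> real) \<Rightarrow> real" where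
  "Lp_norm I p g =
     (if p = \<infinity> then real_of_ereal (esssup (lebesgue_on I) (\<lambda>t. ereal \<bar>g t\<bar>))
      else (\<integral>t. \<bar>g t\<bar> powr enn2real p \<partial>lebesgue_on I) powr (1 / enn2real p))"

definition dp :: "real set \<Rightarrow> real \<Rightarrow> (real \<Rightarrow> real) \<Rightarrow> (real \<Rightarrow> real) \<Rightarrow> real" where
  "dp I p g h = (\<integral>t. \<bar>g t - h t\<bar> powr p \<partial>lebesgue_on I)"

text \<open>The operator T (on I; the pieces I_n are pairwise disjoint, so the sum selects the
  unique n with t in I_n).\<close>
definition fcT :: "(nat \<Rightarrow> real) \<Rightarrow> nat \<Rightarrow> (nat \<Rightarrow> real \<Rightarrow> real) \<Rightarrow>
    (real \<Rightarrow> real) \<Rightarrow> (real \<Rightarrow> real) \<Rightarrow> (real \<Rightarrow> real) \<Rightarrow> real \<Rightarrow> real" where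
  "fcT x N \<alpha> f b g t = f t + (\<Sum>n\<in>{1..N}. if t \<in> Iseg x n then
      \<alpha> n (Linv x N n t) * (g (Linv x N n t) - b (Linv x N n t)) else 0)"

definition frac_conv :: "(nat \<Rightarrow> real) \<Rightarrow> nat \<Rightarrow> (nat \<Rightarrow> real \<Rightarrow> real) \<Rightarrow> ennreal \<Rightarrow>
    (real \<Rightarrow> real) \<Rightarrow> (real \<Rightarrow> real) \<Rightarrow> (real \<Rightarrow> real)" where
  "frac_conv x N \<alpha> p f b = (SOME h. memLp (Ival x N) p h \<and>
      (AE t in lebesgue_on (Ival x N). fcT x N \<alpha> f b h t = h t))"

end

theory Submission
  imports Defs
begin


locale fcset =
  fixes x :: "nat \<Rightarrow> real" and N :: nat and \<alpha> :: "nat \<Rightarrow> real \<Rightarrow> real"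
  assumes N2: "N \<ge> 2"
    and smono: "strict_mono_on {0..N} x"
begin

abbreviation "I \<equiv> Ival x N"

lemma xlt: "i < j \<Longrightarrow> j \<le> N \<Longrightarrow> x i < x j"
  using smono by (auto simp: strict_mono_on_def)

lemma xle: "i \<le> j \<Longrightarrow> j \<le> N \<Longrightarrow> x i \<le> x j"
  using xlt by (cases "i = j") (auto simp: order.strict_implies_order)

lemma x0N: "x 0 < x N" using xlt N2 by auto

lemma seg_lt: "n \<in> {1..N} \<Longrightarrow> x (n - 1) < x n"
  using xlt by auto

lemma Iseg_sub: "n \<in> {1..N} \<Longrightarrow> Iseg x n \<subseteq> I"
proof -
  assume n: "n \<in> {1..N}"
  have a: "x 0 \<le> x (n - 1)" "x n \<le> x N" using xle[of 0 "n - 1"] xle[of n N] n by auto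
  show ?thesis
  proof
    fix t assume "t \<in> Iseg x n"
    then have "x (n - 1) \<le> t" "t \<le> x n" by (auto simp: Iseg_def split: if_splits)
    then show "t \<in> I" using a by (auto simp: Ival_def)
  qed
qed

lemma Iseg_disj: "n \<in> {1..N} \<Longrightarrow> m \<in> {1..N} \<Longrightarrow> t \<in> Iseg x n \<Longrightarrow> t \<in> Iseg x m \<Longrightarrow> n = m"
proof (rule ccontr)
  have key: "False" if "n < m" "n \<in> {1..N}" "m \<in> {1..N}" "t \<in> Iseg x n" "t \<in> Iseg x m" for n m
  proof -
    have "t \<le> x n" using that by (auto simp: Iseg_def split: if_splits)
    moreover have "x n \<le> x (m - 1)" using that xle by auto
    moreover have "x (m - 1) < t" using that by (auto simp: Iseg_def split: if_splits)
    ultimately show False by auto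
  qed
  assume "n \<noteq> m" "n \<in> {1..N}" "m \<in> {1..N}" "t \<in> Iseg x n" "t \<in> Iseg x m"
  then show False using key[of n m] key[of m n] by (meson linorder_neqE_nat)
qed

lemma Iseg_cover: "t \<in> I \<Longrightarrow> \<exists>n\<in>{1..N}. t \<in> Iseg x n"
proof -
  assume t: "t \<in> I"
  show ?thesis
  proof (cases "t \<le> x 1")
    case True then show ?thesis using t N2 by (auto simp: Iseg_def Ival_def intro!: bexI[of _ 1])
  next
    case False
    define n where "n = (LEAST m. t \<le> x m)"
    have tN: "t \<le> x N" using t by (auto simp: Ival_def)
    have n1: "t \<le> x n" unfolding n_def by (rule LeastI[of _ N]) (rule tN)
    have n2: "n \<le> N" unfolding n_def by (rule Least_le) (rule tN)
    have "n \<noteq> 0"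
    proof
      assume "n = 0"
      then have "t \<le> x 0" using n1 by simp
      moreover have "x 0 \<le> x 1" using xle[of 0 1] N2 by simp
      ultimately show False using False by simp
    qed
    moreover have "n \<noteq> 1" using n1 False by auto
    moreover have "\<not> t \<le> x (n - 1)"
    proof
      assume "t \<le> x (n - 1)"
      then have "n \<le> n - 1" unfolding n_def by (rule Least_le)
      with \<open>n \<noteq> 0\<close> show False by auto
    qed
    ultimately show ?thesis using n1 n2 by (auto simp: Iseg_def intro!: bexI[of _ n])
  qed
qed

lemma Linv_in: "n \<in> {1..N} \<Longrightarrow> t \<in> Iseg x n \<Longrightarrow> Linv x N n t \<in> I"
proof -
  assume n: "n \<in> {1..N}" and t: "t \<in> Iseg x n"
  have d: "x (n - 1) < x n" using seg_lt[OF n] .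
  have t1: "x (n - 1) \<le> t" "t \<le> x n" using t by (auto simp: Iseg_def split: if_splits)
  define k where "k = (t - x (n - 1)) / (x n - x (n - 1))"
  have k: "0 \<le> k" "k \<le> 1" using t1 d by (auto simp: k_def divide_simps)
  have "Linv x N n t = x 0 + (x N - x 0) * k" unfolding Linv_def k_def by simp
  moreover have "(x N - x 0) * k \<le> (x N - x 0)" using k x0N by (simp add: mult_left_le)
  moreover have "0 \<le> (x N - x 0) * k" using k x0N by simp
  ultimately have "x 0 \<le> Linv x N n t \<and> Linv x N n t \<le> x N" by linarith
  then show ?thesis unfolding Ival_def by simp
qed

definition "tau t = (\<Sum>n\<in>{1..N}. if t \<in> Iseg x n then Linv x N n t else 0)"
definition "Aco t = (\<Sum>n\<in>{1..N}. if t \<in> Iseg x n then \<alpha> n (Linv x N n t) else 0)"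

lemma sum_sel:
  assumes "n \<in> {1..N}" "t \<in> Iseg x n"
  shows "(\<Sum>m\<in>{1..N}. if t \<in> Iseg x m then g m else 0) = (g n :: real)"
proof -
  have "(\<Sum>m\<in>{1..N}. if t \<in> Iseg x m then g m else 0) = (\<Sum>m\<in>{1..N}. if m = n then g m else 0)"
  proof (rule sum.cong)
    fix m assume m: "m \<in> {1..N}"
    have "t \<in> Iseg x m \<longleftrightarrow> m = n" using Iseg_disj[OF m assms(1) _ assms(2)] assms(2) by blast
    then show "(if t \<in> Iseg x m then g m else 0) = (if m = n then g m else 0)" by simp
  qed simp
  also have "\<dots> = g n" using assms(1) by simp
  finally show ?thesis .
qed

lemma tau_eq: "n \<in> {1..N} \<Longrightarrow> t \<in> Iseg x n \<Longrightarrow> tau t = Linv x N n t"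
  unfolding tau_def by (rule sum_sel)

lemma Aco_eq: "n \<in> {1..N} \<Longrightarrow> t \<in> Iseg x n \<Longrightarrow> Aco t = \<alpha> n (tau t)"
proof -
  assume n: "n \<in> {1..N}" "t \<in> Iseg x n"
  have "Aco t = \<alpha> n (Linv x N n t)" unfolding Aco_def by (rule sum_sel[OF n])
  then show ?thesis using tau_eq[OF n] by simp
qed

lemma tau_in: "t \<in> I \<Longrightarrow> tau t \<in> I"
proof -
  assume "t \<in> I"
  then obtain n where n: "n \<in> {1..N}" "t \<in> Iseg x n" using Iseg_cover by blast
  show ?thesis using tau_eq[OF n] Linv_in[OF n] by simp
qed

lemma fcT_eq: "t \<in> I \<Longrightarrow> fcT x N \<alpha> f b g t = f t + Aco t * (g (tau t) - b (tau t))"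
proof -
  assume "t \<in> I"
  then obtain n where n: "n \<in> {1..N}" "t \<in> Iseg x n" using Iseg_cover by blast
  have "fcT x N \<alpha> f b g t = f t + \<alpha> n (Linv x N n t) * (g (Linv x N n t) - b (Linv x N n t))"
    unfolding fcT_def
    using sum_sel[OF n, of "\<lambda>n. \<alpha> n (Linv x N n t) * (g (Linv x N n t) - b (Linv x N n t))"]
    by (simp only:)
  then show ?thesis using Aco_eq[OF n] tau_eq[OF n] by (simp only:)
qed

end


context fcset begin

abbreviation "M \<equiv> lebesgue_on I"

lemma I_sets[simp]: "I \<in> sets lebesgue"
  unfolding Ival_def by simp

lemma space_M[simp]: "space M = I" by simp

lemma Iseg_sets[simp]: "Iseg x n \<in> sets lebesgue"
  unfolding Iseg_def by simp

lemma Linv_affine: "n \<in> {1..N} \<Longrightarrow> Linv x N n = (\<lambda>t. (x 0 - (x N - x 0) / (x n - x (n - 1)) * x (n - 1)) + ((x N - x 0) / (x n - x (n - 1))) * t)"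
  unfolding Linv_def by (rule ext) (simp add: right_diff_distrib)

lemma Linv_meas: "n \<in> {1..N} \<Longrightarrow> Linv x N n \<in> lebesgue \<rightarrow>\<^sub>M lebesgue"
proof -
  assume n: "n \<in> {1..N}"
  have k: "(x N - x 0) / (x n - x (n - 1)) \<noteq> 0" using x0N seg_lt[OF n] by auto
  show ?thesis
    using lebesgue_affine_measurable[where c="\<lambda>_::real. (x N - x 0) / (x n - x (n - 1))"
        and t="x 0 - (x N - x 0) / (x n - x (n - 1)) * x (n - 1)"] k
    by (subst Linv_affine[OF n]) simp
qed

lemma tau_meas: "tau \<in> M \<rightarrow>\<^sub>M M"
proof (rule measurableI)
  show "t \<in> space M \<Longrightarrow> tau t \<in> space M" for t using tau_in by simp
  fix A assume A: "A \<in> sets M"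
  then have A': "A \<in> sets lebesgue" "A \<subseteq> I" using sets_restrict_space_iff[of I lebesgue A] by auto
  have eq: "tau -` A \<inter> space M = (\<Union>n\<in>{1..N}. Iseg x n \<inter> (Linv x N n -` A))"
  proof (rule set_eqI, rule iffI)
    fix t assume "t \<in> tau -` A \<inter> space M"
    then have "t \<in> I" "tau t \<in> A" by auto
    then obtain n where n: "n \<in> {1..N}" "t \<in> Iseg x n" using Iseg_cover[of t] by auto
    then show "t \<in> (\<Union>n\<in>{1..N}. Iseg x n \<inter> (Linv x N n -` A))"
      using \<open>tau t \<in> A\<close> tau_eq[OF n] by auto
  next
    fix t assume "t \<in> (\<Union>n\<in>{1..N}. Iseg x n \<inter> (Linv x N n -` A))"
    then obtain n where n: "n \<in> {1..N}" "t \<in> Iseg x n" "Linv x N n t \<in> A" by auto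
    then have "t \<in> space M" using Iseg_sub by auto
    moreover have "tau t \<in> A" using n tau_eq by auto
    ultimately show "t \<in> tau -` A \<inter> space M" by simp
  qed
  have "(\<Union>n\<in>{1..N}. Iseg x n \<inter> (Linv x N n -` A)) \<in> sets lebesgue"
  proof (intro sets.finite_UN ballI sets.Int)
    fix n assume n: "n \<in> {1..N}"
    show "Iseg x n \<in> sets lebesgue" by simp
    have "Linv x N n -` A \<inter> space lebesgue \<in> sets lebesgue"
      using measurable_sets[OF Linv_meas[OF n] A'(1)] .
    then show "Linv x N n -` A \<in> sets lebesgue" by simp
  qed simp
  moreover have "(\<Union>n\<in>{1..N}. Iseg x n \<inter> (Linv x N n -` A)) \<subseteq> I" using Iseg_sub by blast
  ultimately show "tau -` A \<inter> space M \<in> sets M"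
    unfolding eq by (simp add: sets_restrict_space_iff)
qed

lemma sum_sel':
  assumes "n \<in> {1..N}" "t \<in> Iseg x n"
  shows "(\<Sum>m\<in>{1..N}. if t \<in> Iseg x m then g m else 0) = (g n :: 'a::comm_monoid_add)"
proof -
  have "(\<Sum>m\<in>{1..N}. if t \<in> Iseg x m then g m else 0) = (\<Sum>m\<in>{1..N}. if m = n then g m else 0)"
  proof (rule sum.cong)
    fix m assume m: "m \<in> {1..N}"
    have "t \<in> Iseg x m \<longleftrightarrow> m = n" using Iseg_disj[OF m assms(1) _ assms(2)] assms(2) by blast
    then show "(if t \<in> Iseg x m then g m else 0) = (if m = n then g m else 0)" by simp
  qed simp
  also have "\<dots> = g n" using assms(1) by simp
  finally show ?thesis .
qed

lemma tele: "(\<Sum>n\<in>{1..K::nat}. (y n - y (n - 1))::real) = y K - y 0"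
  by (induction K) (auto simp: sum.cl_ivl_Suc)

lemma CV:
  fixes g :: "real \<Rightarrow> ennreal"
  assumes g: "g \<in> borel_measurable M"
  shows "(\<integral>\<^sup>+t. g (tau t) \<partial>M) = (\<integral>\<^sup>+t. g t \<partial>M)"
proof -
  define g0 where "g0 t = g t * indicator I t" for t
  have g0m: "g0 \<in> borel_measurable lebesgue"
    using g borel_measurable_restrict_space_iff_ennreal[of I lebesgue g] unfolding g0_def by simp
  define d where "d n = (x n - x (n - 1)) / (x N - x 0)" for n
  have dpos: "d n > 0" if "n \<in> {1..N}" for n using seg_lt[OF that] x0N by (simp add: d_def)
  have LHS: "(\<integral>\<^sup>+t. g (tau t) \<partial>M) = (\<integral>\<^sup>+t. g (tau t) * indicator I t \<partial>lebesgue)"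
    by (simp add: nn_integral_restrict_space)
  have RHS: "(\<integral>\<^sup>+t. g t \<partial>M) = (\<integral>\<^sup>+t. g0 t \<partial>lebesgue)"
    by (simp add: nn_integral_restrict_space g0_def)
  have pw: "g (tau t) * indicator I t = (\<Sum>n\<in>{1..N}. g0 (Linv x N n t) * indicator (Iseg x n) t)" for t
  proof (cases "t \<in> I")
    case False
    have "(\<Sum>n\<in>{1..N}. g0 (Linv x N n t) * indicator (Iseg x n) t) = 0"
    proof (rule sum.neutral, rule ballI)
      fix n assume "n \<in> {1..N}"
      then have "t \<notin> Iseg x n" using Iseg_sub False by blast
      then show "g0 (Linv x N n t) * indicator (Iseg x n) t = 0" by simp
    qed
    then show ?thesis using False by simp
  next
    case True
    then obtain n where n: "n \<in> {1..N}" "t \<in> Iseg x n" using Iseg_cover by blast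
    have "(\<Sum>m\<in>{1..N}. g0 (Linv x N m t) * indicator (Iseg x m) t)
        = (\<Sum>m\<in>{1..N}. if t \<in> Iseg x m then g0 (Linv x N m t) else 0)"
      by (intro sum.cong) (auto simp: indicator_def)
    also have "\<dots> = g0 (Linv x N n t)" by (rule sum_sel'[OF n])
    also have "\<dots> = g (tau t)" using Linv_in[OF n] tau_eq[OF n] by (simp add: g0_def)
    finally show ?thesis using True by simp
  qed
  have piece: "(\<integral>\<^sup>+t. g0 (Linv x N n t) * indicator (Iseg x n) t \<partial>lebesgue) = ennreal (d n) * (\<integral>\<^sup>+t. g t \<partial>M)"
    if n: "n \<in> {1..N}" for n
  proof -
    define c where "c = d n"
    define t0 where "t0 = x (n - 1) - c * x 0"
    have c0: "c > 0" using dpos[OF n] by (simp add: c_def)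
    have dn: "x n - x (n - 1) > 0" using seg_lt[OF n] by simp
    have cN: "c * (x N - x 0) = x n - x (n - 1)" using x0N by (simp add: c_def d_def)
    define F where "F t = g0 (Linv x N n t) * indicator (Iseg x n) t" for t
    have Fm: "F \<in> borel_measurable lebesgue"
      unfolding F_def
      by (intro borel_measurable_times_ennreal measurable_compose[OF Linv_meas[OF n] g0m]
          borel_measurable_indicator) simp
    have "(\<integral>\<^sup>+t. F t \<partial>lebesgue) = ennreal \<bar>c\<bar> * (\<integral>\<^sup>+s. F (t0 + c * s) \<partial>lebesgue)"
      by (rule nn_integral_real_affine_lebesgue[OF Fm]) (use c0 in simp)
    also have "(\<integral>\<^sup>+s. F (t0 + c * s) \<partial>lebesgue) = (\<integral>\<^sup>+s. g0 s \<partial>lebesgue)"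
    proof (rule nn_integral_cong_AE)
      have "AE s in lebesgue. s \<noteq> x 0" by (rule AE_completion[OF AE_lborel_singleton])
      then show "AE s in lebesgue. F (t0 + c * s) = g0 s"
      proof eventually_elim
        case (elim s)
        have e1: "t0 + c * s = x (n - 1) + c * (s - x 0)" by (simp add: t0_def algebra_simps)
        have cc: "(x N - x 0) / (x n - x (n - 1)) * c = 1"
          unfolding c_def d_def using x0N dn by simp
        have "Linv x N n (t0 + c * s) = x 0 + ((x N - x 0) / (x n - x (n - 1)) * c) * (s - x 0)"
          unfolding Linv_def e1 by simp
        then have lin: "Linv x N n (t0 + c * s) = s" unfolding cc by simp
        have "t0 + c * s \<in> Iseg x n \<longleftrightarrow> s \<in> I"
        proof
          assume "t0 + c * s \<in> Iseg x n"
          then have "x (n - 1) \<le> t0 + c * s" "t0 + c * s \<le> x n" by (auto simp: Iseg_def split: if_splits)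
          then have "0 \<le> c * (s - x 0)" "c * (s - x 0) \<le> c * (x N - x 0)" using e1 cN by auto
          then have "0 \<le> s - x 0" "s - x 0 \<le> x N - x 0" using c0
            by (simp_all add: zero_le_mult_iff mult_le_cancel_left_pos)
          then show "s \<in> I" by (simp add: Ival_def)
        next
          assume "s \<in> I"
          then have "x 0 < s" "s \<le> x N" using elim by (auto simp: Ival_def)
          then have "0 < c * (s - x 0)" "c * (s - x 0) \<le> c * (x N - x 0)" using c0 by auto
          then have "x (n - 1) < t0 + c * s" "t0 + c * s \<le> x n" using e1 cN by auto
          then show "t0 + c * s \<in> Iseg x n" by (auto simp: Iseg_def)
        qed
        then show ?case unfolding F_def lin by (simp add: g0_def indicator_def)
      qed
    qed
    finally show ?thesis using c0 RHS by (simp add: F_def c_def)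
  qed
  have "(\<integral>\<^sup>+t. g (tau t) \<partial>M) = (\<Sum>n\<in>{1..N}. (\<integral>\<^sup>+t. g0 (Linv x N n t) * indicator (Iseg x n) t \<partial>lebesgue))"
    unfolding LHS pw
    by (rule nn_integral_sum)
      (intro borel_measurable_times_ennreal measurable_compose[OF Linv_meas g0m]
          borel_measurable_indicator, auto)
  also have "\<dots> = (\<Sum>n\<in>{1..N}. ennreal (d n) * (\<integral>\<^sup>+t. g t \<partial>M))"
    by (rule sum.cong) (simp_all add: piece)
  also have "\<dots> = ennreal (\<Sum>n\<in>{1..N}. d n) * (\<integral>\<^sup>+t. g t \<partial>M)"
  proof -
    have "(\<Sum>n\<in>{1..N}. ennreal (d n)) = ennreal (\<Sum>n\<in>{1..N}. d n)"
      by (rule sum_ennreal) (use dpos in \<open>auto intro: less_imp_le\<close>)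
    then show ?thesis by (simp add: sum_distrib_right[symmetric])
  qed
  also have "(\<Sum>n\<in>{1..N}. d n) = 1"
    using x0N tele[of x N] by (simp add: d_def sum_divide_distrib[symmetric])
  finally show ?thesis by simp
qed

end


context fcset begin

lemma taupow_meas: "(tau ^^ k) \<in> M \<rightarrow>\<^sub>M M"
proof (induction k)
  case 0 then show ?case by (simp add: measurable_ident)
next
  case (Suc k) then show ?case by (simp only: funpow.simps) (rule measurable_comp[OF Suc.IH tau_meas])
qed

lemma CVk:
  fixes g :: "real \<Rightarrow> ennreal"
  assumes g: "g \<in> borel_measurable M"
  shows "(\<integral>\<^sup>+t. g ((tau ^^ k) t) \<partial>M) = (\<integral>\<^sup>+t. g t \<partial>M)"
proof (induction k)
  case 0 then show ?case by simp
next
  case (Suc k)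
  have gm: "(\<lambda>t. g ((tau ^^ k) t)) \<in> borel_measurable M"
    using measurable_compose[OF taupow_meas g] .
  have "(\<integral>\<^sup>+t. g ((tau ^^ Suc k) t) \<partial>M) = (\<integral>\<^sup>+t. g ((tau ^^ k) (tau t)) \<partial>M)"
    by (simp add: funpow_Suc_right del: funpow.simps)
  also have "\<dots> = (\<integral>\<^sup>+t. g ((tau ^^ k) t) \<partial>M)" by (rule CV[OF gm])
  finally show ?case using Suc by simp
qed

lemma AT:
  assumes "AE s in M. P s"
  shows "AE t in M. P (tau t)"
proof -
  from assms obtain N0 where N0: "{s \<in> space M. \<not> P s} \<subseteq> N0" "emeasure M N0 = 0" "N0 \<in> sets M"
    by (rule AE_E)
  define N1 where "N1 = tau -` N0 \<inter> space M"
  have N1s: "N1 \<in> sets M" unfolding N1_def using measurable_sets[OF tau_meas N0(3)] .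
  have "emeasure M N1 = (\<integral>\<^sup>+t. indicator N1 t \<partial>M)" using N1s by simp
  also have "\<dots> = (\<integral>\<^sup>+t. indicator N0 (tau t) \<partial>M)"
    by (rule nn_integral_cong) (simp add: N1_def indicator_def)
  also have "\<dots> = (\<integral>\<^sup>+t. indicator N0 t \<partial>M)"
    by (rule CV) (use N0(3) in simp)
  also have "\<dots> = 0" using N0 by simp
  finally have "N1 \<in> null_sets M" using N1s by auto
  moreover have "{t \<in> space M. \<not> P (tau t)} \<subseteq> N1"
    using N0(1) tau_in by (auto simp: N1_def)
  ultimately show ?thesis by (rule AE_I')
qed

lemma ATk:
  assumes "AE s in M. P s"
  shows "AE t in M. P ((tau ^^ k) t)"
  using assms
proof (induction k arbitrary: P)
  case 0 then show ?case by simp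
next
  case (Suc k)
  have "AE t in M. P ((tau ^^ k) (tau t))" by (rule AT[OF Suc.IH[OF Suc.prems]])
  then show ?case by (simp add: funpow_Suc_right del: funpow.simps)
qed

lemma emeasure_I: "emeasure M I = ennreal (x N - x 0)"
proof -
  have "emeasure M I = emeasure lebesgue I" by (rule emeasure_restrict_space) auto
  also have "\<dots> = emeasure lborel I" unfolding Ival_def by simp
  also have "\<dots> = ennreal (x N - x 0)" using x0N unfolding Ival_def by simp
  finally show ?thesis .
qed

lemma Iseg_setsM: "n \<in> {1..N} \<Longrightarrow> Iseg x n \<in> sets M"
  using Iseg_sub by (simp add: sets_restrict_space_iff)

end

locale fcfull = fcset +
  assumes ameas: "\<And>n. n \<in> {1..N} \<Longrightarrow> \<alpha> n \<in> borel_measurable (lebesgue_on (Ival x N))"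
    and Lam1: "Lam x N \<alpha> < 1"
begin

definition "L = real_of_ereal (Lam x N \<alpha>)"

lemma Lam_nonneg: "0 \<le> Lam x N \<alpha>"
proof -
  have ne: "emeasure M (space M) \<noteq> 0" using emeasure_I x0N by simp
  have "esssup M (\<lambda>t. 0::ereal) = 0" by (rule esssup_const[OF ne])
  moreover have "esssup M (\<lambda>t. 0::ereal) \<le> Lam x N \<alpha>"
    unfolding Lam_def
  proof (rule esssup_mono)
    show "(\<lambda>t. 0::ereal) \<in> borel_measurable M" by simp
    fix t
    have "ereal \<bar>\<alpha> 1 t\<bar> \<le> Max ((\<lambda>n. ereal \<bar>\<alpha> n t\<bar>) ` {1..N})"
      using N2 by (intro Max_ge) auto
    then show "0 \<le> Max ((\<lambda>n. ereal \<bar>\<alpha> n t\<bar>) ` {1..N})" by (rule order.trans[rotated]) simp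
  qed
  ultimately show ?thesis by simp
qed

lemma Lam_eq: "Lam x N \<alpha> = ereal L"
  using Lam_nonneg Lam1 unfolding L_def by (cases "Lam x N \<alpha>") auto

lemma L_nonneg: "0 \<le> L" and L_lt1: "L < 1"
  using Lam_nonneg Lam1 Lam_eq by auto

lemma abound: "AE t in M. \<forall>n\<in>{1..N}. \<bar>\<alpha> n t\<bar> \<le> L"
proof -
  have "AE t in M. Max ((\<lambda>n. ereal \<bar>\<alpha> n t\<bar>) ` {1..N}) \<le> Lam x N \<alpha>"
    unfolding Lam_def by (rule esssup_AE)
  then show ?thesis
  proof eventually_elim
    case (elim t)
    show ?case
    proof
      fix n assume n: "n \<in> {1..N}"
      have "ereal \<bar>\<alpha> n t\<bar> \<le> Max ((\<lambda>n. ereal \<bar>\<alpha> n t\<bar>) ` {1..N})"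
        using n by (intro Max_ge) auto
      then have "ereal \<bar>\<alpha> n t\<bar> \<le> Lam x N \<alpha>" using elim by (rule order.trans)
      then show "\<bar>\<alpha> n t\<bar> \<le> L" using Lam_eq by simp
    qed
  qed
qed

lemma Aco_bound: "AE t in M. \<bar>Aco t\<bar> \<le> L"
proof -
  have "AE t in M. \<forall>n\<in>{1..N}. \<bar>\<alpha> n (tau t)\<bar> \<le> L" by (rule AT[OF abound])
  then show ?thesis
  proof (rule AE_mp[OF _ AE_I2], intro impI)
    fix t assume t: "t \<in> space M" and b: "\<forall>n\<in>{1..N}. \<bar>\<alpha> n (tau t)\<bar> \<le> L"
    have "t \<in> I" using t by simp
    then obtain n where n: "n \<in> {1..N}" "t \<in> Iseg x n" using Iseg_cover by blast
    show "\<bar>Aco t\<bar> \<le> L" using Aco_eq[OF n] b n by simp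
  qed
qed

lemma Aco_meas: "Aco \<in> borel_measurable M"
proof -
  have m: "(\<lambda>t. \<Sum>n\<in>{1..N}. indicator (Iseg x n) t * \<alpha> n (tau t)) \<in> borel_measurable M"
    by (intro borel_measurable_sum borel_measurable_times borel_measurable_indicator
        measurable_compose[OF tau_meas ameas] Iseg_setsM) auto
  have eq: "\<And>t. t \<in> space M \<Longrightarrow> Aco t = (\<Sum>n\<in>{1..N}. indicator (Iseg x n) t * \<alpha> n (tau t))"
  proof -
    fix t assume "t \<in> space M"
    then have "t \<in> I" by simp
    then obtain n where n: "n \<in> {1..N}" "t \<in> Iseg x n" using Iseg_cover by blast
    have "(\<Sum>m\<in>{1..N}. indicator (Iseg x m) t * \<alpha> m (tau t)) = (\<Sum>m\<in>{1..N}. if t \<in> Iseg x m then \<alpha> m (tau t) else 0)"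
      by (intro sum.cong) (auto simp: indicator_def)
    also have "\<dots> = \<alpha> n (tau t)" by (rule sum_sel'[OF n])
    finally show "Aco t = (\<Sum>n\<in>{1..N}. indicator (Iseg x n) t * \<alpha> n (tau t))" using Aco_eq[OF n] by simp
  qed
  show ?thesis by (rule measurable_cong[THEN iffD2, OF eq m])
qed

end


context fcfull begin

definition "A1 t = (if \<bar>Aco t\<bar> \<le> L then Aco t else 0)"

lemma A1_bound: "\<bar>A1 t\<bar> \<le> L" using L_nonneg by (simp add: A1_def)

lemma A1_meas: "A1 \<in> borel_measurable M"
proof -
  note [measurable] = Aco_meas
  show ?thesis unfolding A1_def by measurable
qed

lemma A1_ae: "AE t in M. A1 t = Aco t"
  using Aco_bound by eventually_elim (simp add: A1_def)

definition "sig = (1 + L) / 2"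
definition "r = L / sig"

lemma sig_pos: "0 < sig" and sig_lt1: "sig < 1" and L_lt_sig: "L < sig"
  using L_nonneg L_lt1 by (auto simp: sig_def)

lemma r_nonneg: "0 \<le> r" and r_lt1: "r < 1" and L_r: "L = r * sig"
  using sig_pos L_lt_sig L_nonneg by (auto simp: r_def)

definition "Pp k t = (\<Prod>j<k. A1 ((tau ^^ j) t))"

lemma Pp_bound: "\<bar>Pp k t\<bar> \<le> L ^ k"
proof (induction k)
  case 0 then show ?case by (simp add: Pp_def)
next
  case (Suc k)
  have "\<bar>Pp (Suc k) t\<bar> = \<bar>Pp k t\<bar> * \<bar>A1 ((tau ^^ k) t)\<bar>" by (simp add: Pp_def abs_mult)
  also have "\<dots> \<le> L ^ k * L" using Suc A1_bound L_nonneg by (intro mult_mono) auto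
  finally show ?case by (simp add: mult.commute)
qed

lemma Pp_Suc: "Pp (Suc k) t = A1 t * Pp k (tau t)"
  unfolding Pp_def prod.lessThan_Suc_shift by (simp add: funpow_Suc_right del: funpow.simps)

lemma Pp_meas: "Pp k \<in> borel_measurable M"
  unfolding Pp_def
  by (intro borel_measurable_prod measurable_compose[OF taupow_meas A1_meas])

definition "trm c k t = Pp k t * c ((tau ^^ k) t)"
definition "rho q = sig powr q"
definition "Zf q c t = (\<Sum>k. ennreal ((rho q) ^ k * \<bar>c ((tau ^^ k) t)\<bar> powr q))"
definition "hfun q c t = (if Zf q c t < \<infinity> then (\<Sum>k. trm c k t) else 0)"

lemma trm_Suc: "trm c (Suc k) t = A1 t * trm c k (tau t)"
  by (simp add: trm_def Pp_Suc funpow_Suc_right del: funpow.simps)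

lemma trm_0: "trm c 0 t = c t" by (simp add: trm_def Pp_def)

lemma trm_bound: "\<bar>trm c k t\<bar> \<le> L ^ k * \<bar>c ((tau ^^ k) t)\<bar>"
  unfolding trm_def abs_mult by (rule mult_right_mono[OF Pp_bound]) simp

lemma trm_meas: "c \<in> borel_measurable M \<Longrightarrow> trm c k \<in> borel_measurable M"
  unfolding trm_def
  by (intro borel_measurable_times Pp_meas measurable_compose[OF taupow_meas])

lemma sigpow: "(sig ^ k) powr q = (rho q) ^ k"
proof -
  have "(sig ^ k) powr q = (sig powr real k) powr q" using sig_pos by (simp add: powr_realpow)
  also have "\<dots> = (sig powr q) powr real k" by (simp add: powr_powr mult.commute)
  also have "\<dots> = (rho q) ^ k" using sig_pos by (simp add: powr_realpow rho_def)
  finally show ?thesis .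
qed

lemma rho_pos: "0 < rho q" using sig_pos by (simp add: rho_def)

lemma rho_lt1: "0 < q \<Longrightarrow> rho q < 1"
  using sig_pos sig_lt1 by (simp add: rho_def powr01_less_one)

lemma powr_inv: "0 \<le> (y::real) \<Longrightarrow> 0 < q \<Longrightarrow> (y powr q) powr (1 / q) = y"
proof -
  assume y: "0 \<le> y" and q: "0 < q"
  have "(y powr q) powr (1 / q) = y powr (q * (1 / q))" by (rule powr_powr)
  also have "q * (1 / q) = 1" using q by simp
  finally show ?thesis using y by simp
qed

lemma pw_sum:
  assumes q: "0 < q" and Z: "Zf q c t < \<infinity>"
  shows "summable (\<lambda>k. \<bar>trm c k t\<bar>)"
    and "(\<Sum>k. \<bar>trm c k t\<bar>) \<le> (enn2real (Zf q c t)) powr (1 / q) / (1 - r)"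
proof -
  define z where "z = enn2real (Zf q c t)"
  define B where "B = z powr (1 / q)"
  have Bnn: "0 \<le> B" by (simp add: B_def)
  have tb: "\<bar>trm c k t\<bar> \<le> r ^ k * B" for k
  proof -
    let ?ck = "\<bar>c ((tau ^^ k) t)\<bar>"
    have "(\<Sum>j\<in>{k}. ennreal ((rho q) ^ j * \<bar>c ((tau ^^ j) t)\<bar> powr q)) \<le> Zf q c t"
      unfolding Zf_def by (rule sum_le_suminf[OF summableI]) auto
    then have "ennreal ((rho q) ^ k * ?ck powr q) \<le> Zf q c t" by simp
    then have "enn2real (ennreal ((rho q) ^ k * ?ck powr q)) \<le> z"
      unfolding z_def using Z by (intro enn2real_mono) auto
    moreover have "0 \<le> (rho q) ^ k * ?ck powr q" using rho_pos[of q] by simp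
    ultimately have e1: "(rho q) ^ k * ?ck powr q \<le> z" by simp
    have "(sig ^ k * ?ck) powr q = (rho q) ^ k * ?ck powr q"
      using sig_pos by (simp add: powr_mult sigpow)
    then have "(sig ^ k * ?ck) powr q \<le> z" using e1 by simp
    then have "((sig ^ k * ?ck) powr q) powr (1 / q) \<le> z powr (1 / q)"
      using q by (intro powr_mono2) auto
    then have e2: "sig ^ k * ?ck \<le> B" unfolding B_def using powr_inv[OF _ q, of "sig ^ k * ?ck"] sig_pos
      by simp
    have "\<bar>trm c k t\<bar> \<le> L ^ k * ?ck" by (rule trm_bound)
    also have "\<dots> = r ^ k * (sig ^ k * ?ck)" by (simp add: L_r power_mult_distrib)
    also have "\<dots> \<le> r ^ k * B" using e2 r_nonneg by (intro mult_left_mono) auto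
    finally show ?thesis .
  qed
  have sg: "summable (\<lambda>k. r ^ k * B)"
    using r_nonneg r_lt1 by (intro summable_mult2 summable_geometric) auto
  show s: "summable (\<lambda>k. \<bar>trm c k t\<bar>)"
    by (rule summable_comparison_test'[OF sg, of 0]) (use tb in simp)
  have "(\<Sum>k. \<bar>trm c k t\<bar>) \<le> (\<Sum>k. r ^ k * B)" by (rule suminf_le[OF tb s sg])
  also have "\<dots> = (\<Sum>k. r ^ k) * B" using r_nonneg r_lt1 by (intro suminf_mult2[symmetric] summable_geometric) auto
  also have "\<dots> = B / (1 - r)" using r_nonneg r_lt1 by (simp add: suminf_geometric)
  finally show "(\<Sum>k. \<bar>trm c k t\<bar>) \<le> (enn2real (Zf q c t)) powr (1 / q) / (1 - r)"
    by (simp add: B_def z_def)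
qed

lemma Zf_meas:
  assumes cm: "c \<in> borel_measurable M"
  shows "Zf q c \<in> borel_measurable M"
proof -
  have [measurable]: "(\<lambda>t. c ((tau ^^ k) t)) \<in> borel_measurable M" for k
    using measurable_compose[OF taupow_meas cm] .
  show ?thesis unfolding Zf_def by measurable
qed

lemma Zf_int:
  assumes q: "0 < q" and cm: "c \<in> borel_measurable M"
    and cint: "(\<integral>\<^sup>+t. ennreal (\<bar>c t\<bar> powr q) \<partial>M) < \<infinity>"
  shows "(\<integral>\<^sup>+t. Zf q c t \<partial>M) < \<infinity>"
proof -
  have [measurable]: "(\<lambda>t. c ((tau ^^ k) t)) \<in> borel_measurable M" for k
    using measurable_compose[OF taupow_meas cm] .
  have [measurable]: "c \<in> borel_measurable M" by (rule cm)
  define C where "C = (\<integral>\<^sup>+t. ennreal (\<bar>c t\<bar> powr q) \<partial>M)"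
  have "(\<integral>\<^sup>+t. Zf q c t \<partial>M) = (\<Sum>k. (\<integral>\<^sup>+t. ennreal ((rho q) ^ k * \<bar>c ((tau ^^ k) t)\<bar> powr q) \<partial>M))"
    unfolding Zf_def by (rule nn_integral_suminf) measurable
  also have "\<dots> = (\<Sum>k. ennreal ((rho q) ^ k) * C)"
  proof (rule suminf_cong)
    fix k
    have "(\<integral>\<^sup>+t. ennreal ((rho q) ^ k * \<bar>c ((tau ^^ k) t)\<bar> powr q) \<partial>M)
        = (\<integral>\<^sup>+t. ennreal ((rho q) ^ k) * ennreal (\<bar>c ((tau ^^ k) t)\<bar> powr q) \<partial>M)"
      by (intro nn_integral_cong ennreal_mult) (use rho_pos[of q] in auto)
    also have "\<dots> = ennreal ((rho q) ^ k) * (\<integral>\<^sup>+t. ennreal (\<bar>c ((tau ^^ k) t)\<bar> powr q) \<partial>M)"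
      by (rule nn_integral_cmult) measurable
    also have "(\<integral>\<^sup>+t. ennreal (\<bar>c ((tau ^^ k) t)\<bar> powr q) \<partial>M) = C"
      unfolding C_def by (rule CVk[of "\<lambda>s. ennreal (\<bar>c s\<bar> powr q)"]) measurable
    finally show "(\<integral>\<^sup>+t. ennreal ((rho q) ^ k * \<bar>c ((tau ^^ k) t)\<bar> powr q) \<partial>M) = ennreal ((rho q) ^ k) * C" .
  qed
  also have "\<dots> = (\<Sum>k. ennreal ((rho q) ^ k)) * C" by simp
  also have "(\<Sum>k. ennreal ((rho q) ^ k)) = ennreal (\<Sum>k. (rho q) ^ k)"
    using rho_pos[of q] rho_lt1[OF q] by (intro suminf_ennreal2 summable_geometric) auto
  finally show ?thesis using cint by (simp add: C_def ennreal_mult_less_top)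
qed

end


context fcfull begin

lemma h_meas:
  assumes q: "0 < q" and cm: "c \<in> borel_measurable M"
  shows "hfun q c \<in> borel_measurable M"
proof -
  define S where "S K t = (if Zf q c t < \<infinity> then (\<Sum>k<K. trm c k t) else 0)" for K t
  have [measurable]: "Zf q c \<in> borel_measurable M" by (rule Zf_meas[OF cm])
  have [measurable]: "trm c k \<in> borel_measurable M" for k by (rule trm_meas[OF cm])
  have Sm: "S K \<in> borel_measurable M" for K unfolding S_def by measurable
  have lim: "(\<lambda>K. S K t) \<longlonglongrightarrow> hfun q c t" for t
  proof (cases "Zf q c t < \<infinity>")
    case True
    have "summable (\<lambda>k. trm c k t)" using pw_sum(1)[OF q True] by (rule summable_rabs_cancel)
    then show ?thesis using True by (simp add: S_def hfun_def summable_LIMSEQ)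
  next
    case False then show ?thesis by (simp add: S_def hfun_def)
  qed
  show ?thesis by (rule borel_measurable_LIMSEQ_real[OF lim Sm])
qed

lemma h_fix:
  assumes q: "0 < q" and Z1: "Zf q c t < \<infinity>" and Z2: "Zf q c (tau t) < \<infinity>"
  shows "hfun q c t = c t + A1 t * hfun q c (tau t)"
proof -
  have s1: "summable (\<lambda>k. trm c k t)" using pw_sum(1)[OF q Z1] by (rule summable_rabs_cancel)
  have s2: "summable (\<lambda>k. trm c k (tau t))" using pw_sum(1)[OF q Z2] by (rule summable_rabs_cancel)
  have "(\<Sum>k. trm c (Suc k) t) = (\<Sum>k. trm c k t) - trm c 0 t" by (rule suminf_split_head[OF s1])
  then have "(\<Sum>k. trm c k t) = c t + (\<Sum>k. A1 t * trm c k (tau t))" by (simp add: trm_Suc trm_0)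
  also have "(\<Sum>k. A1 t * trm c k (tau t)) = A1 t * (\<Sum>k. trm c k (tau t))" by (rule suminf_mult[OF s2])
  finally show ?thesis using Z1 Z2 by (simp add: hfun_def)
qed

lemma h_bound:
  assumes q: "0 < q"
  shows "ennreal (\<bar>hfun q c t\<bar> powr q) \<le> ennreal ((1 / (1 - r)) powr q) * Zf q c t"
proof (cases "Zf q c t < \<infinity>")
  case False
  have "ennreal ((1 / (1 - r)) powr q) \<noteq> 0" using r_lt1 by simp
  moreover have "Zf q c t = \<infinity>" using False by (metis less_top infinity_ennreal_def)
  ultimately have "ennreal ((1 / (1 - r)) powr q) * Zf q c t = \<infinity>" by (simp add: ennreal_mult_top)
  then show ?thesis by simp
next
  case True
  define z where "z = enn2real (Zf q c t)"
  have z0: "0 \<le> z" by (simp add: z_def)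
  have Zz: "Zf q c t = ennreal z" using True by (simp add: z_def)
  have s: "summable (\<lambda>k. \<bar>trm c k t\<bar>)" using pw_sum(1)[OF q True] .
  have "\<bar>hfun q c t\<bar> = \<bar>\<Sum>k. trm c k t\<bar>" using True by (simp add: hfun_def)
  also have "\<dots> \<le> (\<Sum>k. \<bar>trm c k t\<bar>)" by (rule summable_rabs[OF s])
  also have "\<dots> \<le> z powr (1 / q) / (1 - r)" using pw_sum(2)[OF q True] by (simp add: z_def)
  finally have hb: "\<bar>hfun q c t\<bar> \<le> z powr (1 / q) * (1 / (1 - r))" by simp
  have "\<bar>hfun q c t\<bar> powr q \<le> (z powr (1 / q) * (1 / (1 - r))) powr q"
    using hb q by (intro powr_mono2) auto
  also have "\<dots> = (z powr (1 / q)) powr q * (1 / (1 - r)) powr q"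
    using r_lt1 powr_mult[of "z powr (1 / q)" "1 / (1 - r)" q] by simp
  also have "(z powr (1 / q)) powr q = z"
  proof -
    have "(z powr (1 / q)) powr q = z powr ((1 / q) * q)" by (rule powr_powr)
    also have "(1 / q) * q = 1" using q by simp
    finally show ?thesis using z0 by simp
  qed
  finally have "\<bar>hfun q c t\<bar> powr q \<le> (1 / (1 - r)) powr q * z" by (simp add: mult.commute)
  then have "ennreal (\<bar>hfun q c t\<bar> powr q) \<le> ennreal ((1 / (1 - r)) powr q * z)"
    by (rule ennreal_leI)
  also have "\<dots> = ennreal ((1 / (1 - r)) powr q) * Zf q c t"
    using z0 by (simp add: Zz ennreal_mult)
  finally show ?thesis .
qed

lemma h_int:
  assumes q: "0 < q" and cm: "c \<in> borel_measurable M"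
    and cint: "(\<integral>\<^sup>+t. ennreal (\<bar>c t\<bar> powr q) \<partial>M) < \<infinity>"
  shows "integrable M (\<lambda>t. \<bar>hfun q c t\<bar> powr q)"
proof -
  have [measurable]: "hfun q c \<in> borel_measurable M" by (rule h_meas[OF q cm])
  have [measurable]: "Zf q c \<in> borel_measurable M" by (rule Zf_meas[OF cm])
  have "(\<integral>\<^sup>+t. ennreal (norm (\<bar>hfun q c t\<bar> powr q)) \<partial>M) = (\<integral>\<^sup>+t. ennreal (\<bar>hfun q c t\<bar> powr q) \<partial>M)"
    by simp
  also have "\<dots> \<le> (\<integral>\<^sup>+t. ennreal ((1 / (1 - r)) powr q) * Zf q c t \<partial>M)"
    by (intro nn_integral_mono h_bound[OF q])
  also have "\<dots> = ennreal ((1 / (1 - r)) powr q) * (\<integral>\<^sup>+t. Zf q c t \<partial>M)"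
    by (rule nn_integral_cmult) measurable
  also have "\<dots> < \<infinity>" using Zf_int[OF q cm cint] by (simp add: ennreal_mult_less_top)
  finally have fin: "(\<integral>\<^sup>+t. ennreal (norm (\<bar>hfun q c t\<bar> powr q)) \<partial>M) < \<infinity>" .
  show ?thesis unfolding integrable_iff_bounded
  proof (intro conjI)
    show "(\<lambda>t. \<bar>hfun q c t\<bar> powr q) \<in> borel_measurable M" by measurable
  qed (rule fin)
qed

lemma h_ae_fix:
  assumes q: "0 < q" and cm: "c \<in> borel_measurable M"
    and cint: "(\<integral>\<^sup>+t. ennreal (\<bar>c t\<bar> powr q) \<partial>M) < \<infinity>"
  shows "AE t in M. hfun q c t = c t + A1 t * hfun q c (tau t)"
proof -
  have "AE t in M. Zf q c t \<noteq> \<infinity>"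
    by (rule nn_integral_PInf_AE[OF Zf_meas[OF cm]]) (use Zf_int[OF q cm cint] in simp)
  moreover from this have "AE t in M. Zf q c (tau t) \<noteq> \<infinity>" by (rule AT)
  ultimately show ?thesis
    by eventually_elim (rule h_fix[OF q], auto simp: top.not_eq_extremum)
qed

lemma h_sup:
  assumes q: "0 < q" and K: "0 \<le> K" and cK: "AE s in M. \<bar>c s\<bar> \<le> K"
  shows "AE t in M. \<bar>hfun q c t\<bar> \<le> K / (1 - L)"
proof -
  have "AE t in M. \<forall>k. \<bar>c ((tau ^^ k) t)\<bar> \<le> K"
    unfolding AE_all_countable by (intro allI ATk[OF cK])
  then show ?thesis
  proof eventually_elim
    case (elim t)
    show ?case
    proof (cases "Zf q c t < \<infinity>")
      case False then show ?thesis using K L_lt1 by (simp add: hfun_def)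
    next
      case True
      have s: "summable (\<lambda>k. \<bar>trm c k t\<bar>)" using pw_sum(1)[OF q True] .
      have sg: "summable (\<lambda>k. L ^ k * K)" using L_nonneg L_lt1 by (intro summable_mult2 summable_geometric) auto
      have tb: "\<bar>trm c k t\<bar> \<le> L ^ k * K" for k
        using trm_bound[of c k t] elim L_nonneg
        by (meson mult_left_mono order.trans zero_le_power)
      have "\<bar>hfun q c t\<bar> = \<bar>\<Sum>k. trm c k t\<bar>" using True by (simp add: hfun_def)
      also have "\<dots> \<le> (\<Sum>k. \<bar>trm c k t\<bar>)" by (rule summable_rabs[OF s])
      also have "\<dots> \<le> (\<Sum>k. L ^ k * K)" by (rule suminf_le[OF tb s sg])
      also have "\<dots> = (\<Sum>k. L ^ k) * K" using L_nonneg L_lt1 by (intro suminf_mult2[symmetric] summable_geometric) auto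
      also have "\<dots> = K / (1 - L)" using L_nonneg L_lt1 by (simp add: suminf_geometric)
      finally show ?thesis .
    qed
  qed
qed

end


lemma powsum:
  fixes a b q :: real
  assumes "0 \<le> a" "0 \<le> b" "0 < q"
  shows "(a + b) powr q \<le> 2 powr q * (a powr q + b powr q)"
proof -
  have "a + b \<le> 2 * max a b" by simp
  then have "(a + b) powr q \<le> (2 * max a b) powr q" using assms by (intro powr_mono2) auto
  also have "\<dots> = 2 powr q * (max a b) powr q" using assms by (simp add: powr_mult)
  also have "(max a b) powr q \<le> a powr q + b powr q"
    by (cases "a \<le> b") (auto simp: max_def)
  then have "2 powr q * (max a b) powr q \<le> 2 powr q * (a powr q + b powr q)" by simp
  finally show ?thesis .
qed

lemma subadd:
  fixes a b q :: real
  assumes a: "0 \<le> a" and b: "0 \<le> b" and q: "0 < q" "q \<le> 1"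
  shows "(a + b) powr q \<le> a powr q + b powr q"
proof (cases "a + b = 0")
  case True then show ?thesis using a b by simp
next
  case False
  then have s: "0 < a + b" using a b by simp
  have k: "y / (a + b) \<le> (y / (a + b)) powr q" if y: "0 \<le> y" "y \<le> a + b" for y
  proof (cases "y = 0")
    case True then show ?thesis by simp
  next
    case False
    have "(y / (a + b)) powr 1 \<le> (y / (a + b)) powr q"
      using y s q False by (intro powr_mono') auto
    then show ?thesis using y s by simp
  qed
  have "a powr q = (a + b) powr q * (a / (a + b)) powr q"
    using s a by (simp add: powr_divide)
  moreover have "b powr q = (a + b) powr q * (b / (a + b)) powr q"
    using s b by (simp add: powr_divide)
  moreover have ka: "(a + b) powr q * (a / (a + b)) \<le> (a + b) powr q * (a / (a + b)) powr q"
    by (rule mult_left_mono[OF k[of a]]) (use a b in auto)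
  moreover have kb: "(a + b) powr q * (b / (a + b)) \<le> (a + b) powr q * (b / (a + b)) powr q"
    by (rule mult_left_mono[OF k[of b]]) (use a b in auto)
  ultimately have "a powr q + b powr q \<ge> (a + b) powr q * (a / (a + b)) + (a + b) powr q * (b / (a + b))"
    by linarith
  also have "(a + b) powr q * (a / (a + b)) + (a + b) powr q * (b / (a + b)) = (a + b) powr q"
  proof -
    have "(a + b) powr q * (a / (a + b)) + (a + b) powr q * (b / (a + b)) = (a + b) powr q * ((a + b) / (a + b))"
      by (simp only: distrib_left[symmetric] add_divide_distrib[symmetric])
    then show ?thesis using s by simp
  qed
  finally show ?thesis .
qed

lemma cvx:
  fixes X Y l q :: real
  assumes q: "1 \<le> q" and X: "0 \<le> X" and Y: "0 \<le> Y" and l: "0 \<le> l" "l \<le> 1"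
  shows "(l * X + (1 - l) * Y) powr q \<le> l * X powr q + (1 - l) * Y powr q"
proof -
  have pw: "z powr q \<le> z" if "0 \<le> z" "z \<le> 1" for z :: real
  proof (cases "z = 0")
    case True then show ?thesis by simp
  next
    case False
    have "z powr q \<le> z powr 1" using that q False by (intro powr_mono') auto
    then show ?thesis using that by simp
  qed
  show ?thesis
  proof (cases "X = 0")
    case True
    have "((1 - l) * Y) powr q = (1 - l) powr q * Y powr q" using Y l by (simp add: powr_mult)
    also have "\<dots> \<le> (1 - l) * Y powr q" using pw[of "1 - l"] l by (intro mult_right_mono) auto
    finally show ?thesis using True by simp
  next
    case X0: False
    show ?thesis
    proof (cases "Y = 0")
      case True
      have "(l * X) powr q = l powr q * X powr q" using X l by (simp add: powr_mult)
      also have "\<dots> \<le> l * X powr q" using pw[of l] l by (intro mult_right_mono) auto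
      finally show ?thesis using True by simp
    next
      case False
      have cv: "convex_on {0<..} (\<lambda>x::real. x powr q)" by (rule powr_convex[OF q])
      have "((1 - (1 - l)) *\<^sub>R X + (1 - l) *\<^sub>R Y) powr q \<le> (1 - (1 - l)) * X powr q + (1 - l) * Y powr q"
        using convex_onD[OF cv, of "1 - l" X Y] X Y X0 False l by auto
      then show ?thesis by simp
    qed
  qed
qed

context fcfull begin

lemma ess_fin:
  assumes gm: "g \<in> borel_measurable M" and fin: "esssup M (\<lambda>t. ereal \<bar>g t\<bar>) < \<infinity>"
  shows "esssup M (\<lambda>t. ereal \<bar>g t\<bar>) = ereal (real_of_ereal (esssup M (\<lambda>t. ereal \<bar>g t\<bar>)))"
    and "0 \<le> real_of_ereal (esssup M (\<lambda>t. ereal \<bar>g t\<bar>))"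
    and "AE t in M. \<bar>g t\<bar> \<le> real_of_ereal (esssup M (\<lambda>t. ereal \<bar>g t\<bar>))"
proof -
  have ne: "emeasure M (space M) \<noteq> 0" using emeasure_I x0N by simp
  have "esssup M (\<lambda>t. 0::ereal) = 0" by (rule esssup_const[OF ne])
  moreover have "esssup M (\<lambda>t. 0::ereal) \<le> esssup M (\<lambda>t. ereal \<bar>g t\<bar>)"
    by (rule esssup_mono) auto
  ultimately have nn: "0 \<le> esssup M (\<lambda>t. ereal \<bar>g t\<bar>)" by simp
  then show e: "esssup M (\<lambda>t. ereal \<bar>g t\<bar>) = ereal (real_of_ereal (esssup M (\<lambda>t. ereal \<bar>g t\<bar>)))"
    using fin by (cases "esssup M (\<lambda>t. ereal \<bar>g t\<bar>)") auto
  show "0 \<le> real_of_ereal (esssup M (\<lambda>t. ereal \<bar>g t\<bar>))" using nn by (simp add: real_of_ereal_pos)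
  have "AE t in M. ereal \<bar>g t\<bar> \<le> esssup M (\<lambda>t. ereal \<bar>g t\<bar>)" by (rule esssup_AE)
  then show "AE t in M. \<bar>g t\<bar> \<le> real_of_ereal (esssup M (\<lambda>t. ereal \<bar>g t\<bar>))"
    by eventually_elim (subst (asm) e, simp)
qed

lemma memLp_meas: "memLp I p g \<Longrightarrow> g \<in> borel_measurable M"
  by (simp add: memLp_def)

lemma nnint_fin: "integrable M (\<lambda>t. \<bar>g t\<bar> powr q) \<Longrightarrow> (\<integral>\<^sup>+t. ennreal (\<bar>g t\<bar> powr q) \<partial>M) < \<infinity>"
  using integrableD(2)[of M "\<lambda>t. \<bar>g t\<bar> powr q"] by (simp add: less_top)

lemma exists_fp:
  assumes p: "0 < p" and mf: "memLp I p f" and mb: "memLp I p b"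
  shows "\<exists>h. memLp I p h \<and> (AE t in M. fcT x N \<alpha> f b h t = h t)"
proof -
  have fm[measurable]: "f \<in> borel_measurable M" using memLp_meas[OF mf] .
  have bm[measurable]: "b \<in> borel_measurable M" using memLp_meas[OF mb] .
  have btm[measurable]: "(\<lambda>t. b (tau t)) \<in> borel_measurable M" using measurable_compose[OF tau_meas bm] .
  have [measurable]: "A1 \<in> borel_measurable M" by (rule A1_meas)
  define c where "c t = f t - A1 t * b (tau t)" for t
  have cm[measurable]: "c \<in> borel_measurable M" unfolding c_def by measurable
  have cb: "\<bar>c t\<bar> \<le> \<bar>f t\<bar> + L * \<bar>b (tau t)\<bar>" for t
  proof -
    have "\<bar>A1 t * b (tau t)\<bar> \<le> L * \<bar>b (tau t)\<bar>" unfolding abs_mult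
      by (rule mult_right_mono[OF A1_bound]) simp
    then show ?thesis unfolding c_def by linarith
  qed
  have fixp: "AE t in M. fcT x N \<alpha> f b h t = h t"
    if hfix: "AE t in M. h t = c t + A1 t * h (tau t)" for h
    using hfix A1_ae AE_space
  proof eventually_elim
    case (elim t)
    then have "fcT x N \<alpha> f b h t = f t + Aco t * (h (tau t) - b (tau t))" by (intro fcT_eq) simp
    also have "\<dots> = h t" using elim by (simp add: c_def algebra_simps)
    finally show ?case .
  qed
  show ?thesis
  proof (cases "p = \<infinity>")
    case True
    have ff: "esssup M (\<lambda>t. ereal \<bar>f t\<bar>) < \<infinity>" using mf True by (simp add: memLp_def)
    have bf: "esssup M (\<lambda>t. ereal \<bar>b t\<bar>) < \<infinity>" using mb True by (simp add: memLp_def)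
    define Kf where "Kf = real_of_ereal (esssup M (\<lambda>t. ereal \<bar>f t\<bar>))"
    define Kb where "Kb = real_of_ereal (esssup M (\<lambda>t. ereal \<bar>b t\<bar>))"
    have Kf0: "0 \<le> Kf" and Kb0: "0 \<le> Kb" using ess_fin(2)[OF fm ff] ess_fin(2)[OF bm bf] by (simp_all add: Kf_def Kb_def)
    have aef: "AE t in M. \<bar>f t\<bar> \<le> Kf" using ess_fin(3)[OF fm ff] by (simp add: Kf_def)
    have aeb: "AE t in M. \<bar>b (tau t)\<bar> \<le> Kb" using AT[OF ess_fin(3)[OF bm bf]] by (simp add: Kb_def)
    define K where "K = Kf + L * Kb"
    have K0: "0 \<le> K" using Kf0 Kb0 L_nonneg by (simp add: K_def)
    have aec: "AE t in M. \<bar>c t\<bar> \<le> K"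
      using aef aeb
    proof eventually_elim
      case (elim t)
      have "L * \<bar>b (tau t)\<bar> \<le> L * Kb" using elim L_nonneg by (intro mult_left_mono) auto
      then show ?case using cb[of t] elim by (simp add: K_def)
    qed
    have cint: "(\<integral>\<^sup>+t. ennreal (\<bar>c t\<bar> powr 1) \<partial>M) < \<infinity>"
    proof -
      have "(\<integral>\<^sup>+t. ennreal (\<bar>c t\<bar> powr 1) \<partial>M) \<le> (\<integral>\<^sup>+t. ennreal K \<partial>M)"
        using aec by (intro nn_integral_mono_AE) (auto elim!: eventually_mono intro: ennreal_leI)
      also have "\<dots> = ennreal K * ennreal (x N - x 0)" by (simp add: emeasure_I)
      also have "\<dots> < \<infinity>" by (simp add: ennreal_mult_less_top)
      finally show ?thesis .
    qed
    define h where "h = hfun 1 c"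
    have hm[measurable]: "h \<in> borel_measurable M" unfolding h_def by (rule h_meas) auto
    have hfix: "AE t in M. h t = c t + A1 t * h (tau t)" unfolding h_def by (rule h_ae_fix[OF _ cm cint]) simp
    have hb: "AE t in M. \<bar>h t\<bar> \<le> K / (1 - L)" unfolding h_def by (rule h_sup[OF _ K0 aec]) simp
    have "esssup M (\<lambda>t. ereal \<bar>h t\<bar>) \<le> ereal (K / (1 - L))"
      by (rule esssup_I) (use hb in \<open>auto elim!: eventually_mono\<close>)
    then have "esssup M (\<lambda>t. ereal \<bar>h t\<bar>) < \<infinity>" by (rule le_less_trans) simp
    then have "memLp I p h" using True hm by (simp add: memLp_def)
    then show ?thesis using fixp[OF hfix] by blast
  next
    case False
    define q where "q = enn2real p"
    have q: "0 < q" using p False by (simp add: q_def enn2real_positive_iff less_top)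
    have fi: "integrable M (\<lambda>t. \<bar>f t\<bar> powr q)" using mf False by (simp add: memLp_def q_def)
    have bi: "integrable M (\<lambda>t. \<bar>b t\<bar> powr q)" using mb False by (simp add: memLp_def q_def)
    have [measurable]: "(\<lambda>t. ennreal (\<bar>b t\<bar> powr q)) \<in> borel_measurable M" by measurable
    have bt: "(\<integral>\<^sup>+t. ennreal (\<bar>b (tau t)\<bar> powr q) \<partial>M) = (\<integral>\<^sup>+t. ennreal (\<bar>b t\<bar> powr q) \<partial>M)"
      by (rule CV[of "\<lambda>s. ennreal (\<bar>b s\<bar> powr q)"]) measurable
    have "(\<integral>\<^sup>+t. ennreal (\<bar>c t\<bar> powr q) \<partial>M)
        \<le> (\<integral>\<^sup>+t. ennreal (2 powr q) * (ennreal (\<bar>f t\<bar> powr q) + ennreal (L powr q) * ennreal (\<bar>b (tau t)\<bar> powr q)) \<partial>M)"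
    proof (rule nn_integral_mono)
      fix t
      have "\<bar>c t\<bar> powr q \<le> (\<bar>f t\<bar> + L * \<bar>b (tau t)\<bar>) powr q"
        using cb[of t] q by (intro powr_mono2) auto
      also have "\<dots> \<le> 2 powr q * (\<bar>f t\<bar> powr q + (L * \<bar>b (tau t)\<bar>) powr q)"
        using L_nonneg q by (intro powsum) auto
      also have "(L * \<bar>b (tau t)\<bar>) powr q = L powr q * \<bar>b (tau t)\<bar> powr q"
        using L_nonneg by (simp add: powr_mult)
      finally have "ennreal (\<bar>c t\<bar> powr q) \<le> ennreal (2 powr q * (\<bar>f t\<bar> powr q + L powr q * \<bar>b (tau t)\<bar> powr q))"
        by (rule ennreal_leI)
      also have "\<dots> = ennreal (2 powr q) * (ennreal (\<bar>f t\<bar> powr q) + ennreal (L powr q) * ennreal (\<bar>b (tau t)\<bar> powr q))"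
        by (simp add: ennreal_mult ennreal_plus)
      finally show "ennreal (\<bar>c t\<bar> powr q) \<le> ennreal (2 powr q) * (ennreal (\<bar>f t\<bar> powr q) + ennreal (L powr q) * ennreal (\<bar>b (tau t)\<bar> powr q))" .
    qed
    also have "\<dots> = ennreal (2 powr q) * ((\<integral>\<^sup>+t. ennreal (\<bar>f t\<bar> powr q) \<partial>M) + ennreal (L powr q) * (\<integral>\<^sup>+t. ennreal (\<bar>b (tau t)\<bar> powr q) \<partial>M))"
      by (simp add: nn_integral_cmult nn_integral_add)
    also have "\<dots> < \<infinity>"
      using nnint_fin[OF fi] nnint_fin[OF bi] unfolding bt
      by (simp add: ennreal_mult_less_top)
    finally have cint: "(\<integral>\<^sup>+t. ennreal (\<bar>c t\<bar> powr q) \<partial>M) < \<infinity>" .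
    define h where "h = hfun q c"
    have hm: "h \<in> borel_measurable M" unfolding h_def by (rule h_meas[OF q cm])
    have hfix: "AE t in M. h t = c t + A1 t * h (tau t)" unfolding h_def by (rule h_ae_fix[OF q cm cint])
    have hi: "integrable M (\<lambda>t. \<bar>h t\<bar> powr q)" unfolding h_def by (rule h_int[OF q cm cint])
    have "memLp I p h" using hm hi False by (simp add: memLp_def q_def)
    then show ?thesis using fixp[OF hfix] by blast
  qed
qed

lemma fc_prop:
  assumes "0 < p" "memLp I p f" "memLp I p b"
  shows "memLp I p (frac_conv x N \<alpha> p f b) \<and> (AE t in M. fcT x N \<alpha> f b (frac_conv x N \<alpha> p f b) t = frac_conv x N \<alpha> p f b t)"
  unfolding frac_conv_def by (rule someI_ex[OF exists_fp[OF assms]])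

end


context fcfull begin

lemma CVB:
  fixes g :: "real \<Rightarrow> real"
  assumes gm: "g \<in> borel_measurable M" and gi: "integrable M g" and g0: "\<And>t. 0 \<le> g t"
  shows "integrable M (\<lambda>t. g (tau t))" and "(\<integral>t. g (tau t) \<partial>M) = (\<integral>t. g t \<partial>M)"
proof -
  have [measurable]: "g \<in> borel_measurable M" by (rule gm)
  have gtm[measurable]: "(\<lambda>t. g (tau t)) \<in> borel_measurable M" using measurable_compose[OF tau_meas gm] .
  have e: "(\<integral>\<^sup>+t. ennreal (g (tau t)) \<partial>M) = (\<integral>\<^sup>+t. ennreal (g t) \<partial>M)"
    by (rule CV[of "\<lambda>s. ennreal (g s)"]) measurable
  show "integrable M (\<lambda>t. g (tau t))"
    unfolding integrable_iff_bounded using gi g0 e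
    by (auto simp: integrable_iff_bounded)
  show "(\<integral>t. g (tau t) \<partial>M) = (\<integral>t. g t \<partial>M)"
    using e g0 by (simp add: integral_eq_nn_integral)
qed

lemma int_diff:
  fixes u v w :: "real \<Rightarrow> real" and q :: real
  assumes q: "0 < q" and um: "u \<in> borel_measurable M" and vm: "v \<in> borel_measurable M"
    and iu: "integrable M (\<lambda>t. \<bar>u t\<bar> powr q)" and iv: "integrable M (\<lambda>t. \<bar>v t\<bar> powr q)"
    and wm: "w \<in> borel_measurable M" and ae: "AE t in M. \<bar>w t\<bar> \<le> \<bar>u t\<bar> + \<bar>v t\<bar>"
  shows "integrable M (\<lambda>t. \<bar>w t\<bar> powr q)"
proof (rule Bochner_Integration.integrable_bound)
  show "integrable M (\<lambda>t. 2 powr q * (\<bar>u t\<bar> powr q + \<bar>v t\<bar> powr q))"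
    using iu iv by (intro integrable_mult_right Bochner_Integration.integrable_add)
  have [measurable]: "w \<in> borel_measurable M" by (rule wm)
  show "(\<lambda>t. \<bar>w t\<bar> powr q) \<in> borel_measurable M" by measurable
  show "AE t in M. norm (\<bar>w t\<bar> powr q) \<le> norm (2 powr q * (\<bar>u t\<bar> powr q + \<bar>v t\<bar> powr q))"
    using ae
  proof eventually_elim
    case (elim t)
    have "\<bar>w t\<bar> powr q \<le> (\<bar>u t\<bar> + \<bar>v t\<bar>) powr q" using elim q by (intro powr_mono2) auto
    also have "\<dots> \<le> 2 powr q * (\<bar>u t\<bar> powr q + \<bar>v t\<bar> powr q)" using q by (intro powsum) auto
    finally show ?case by simp
  qed
qed

lemma ess_diff:
  fixes u v :: "real \<Rightarrow> real"
  assumes um: "u \<in> borel_measurable M" and vm: "v \<in> borel_measurable M"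
    and fu: "esssup M (\<lambda>t. ereal \<bar>u t\<bar>) < \<infinity>" and fv: "esssup M (\<lambda>t. ereal \<bar>v t\<bar>) < \<infinity>"
  shows "esssup M (\<lambda>t. ereal \<bar>u t - v t\<bar>) < \<infinity>"
proof -
  have [measurable]: "u \<in> borel_measurable M" "v \<in> borel_measurable M" by (rule um, rule vm)
  have "esssup M (\<lambda>t. ereal \<bar>u t - v t\<bar>) \<le> ereal (real_of_ereal (esssup M (\<lambda>t. ereal \<bar>u t\<bar>)) + real_of_ereal (esssup M (\<lambda>t. ereal \<bar>v t\<bar>)))"
  proof (rule esssup_I)
    show "(\<lambda>t. ereal \<bar>u t - v t\<bar>) \<in> borel_measurable M" by measurable
    show "AE t in M. ereal \<bar>u t - v t\<bar> \<le> ereal (real_of_ereal (esssup M (\<lambda>t. ereal \<bar>u t\<bar>)) + real_of_ereal (esssup M (\<lambda>t. ereal \<bar>v t\<bar>)))"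
      using ess_fin(3)[OF um fu] ess_fin(3)[OF vm fv] by eventually_elim auto
  qed
  then show ?thesis by (rule le_less_trans) simp
qed

lemma key_ae:
  assumes f1: "AE t in M. fcT x N \<alpha> f b h1 t = h1 t"
    and f2: "AE t in M. fcT x N \<alpha> f' b' h2 t = h2 t"
  shows "AE t in M. \<bar>h1 t - h2 t\<bar> \<le> \<bar>f t - f' t\<bar> + L * \<bar>h1 (tau t) - h2 (tau t)\<bar> + L * \<bar>b (tau t) - b' (tau t)\<bar>"
  using f1 f2 Aco_bound AE_space
proof eventually_elim
  case (elim t)
  then have "t \<in> I" by simp
  have "h1 t - h2 t = (f t - f' t) + Aco t * ((h1 (tau t) - h2 (tau t)) - (b (tau t) - b' (tau t)))"
    using elim(1,2) fcT_eq[OF \<open>t \<in> I\<close>, of f b h1] fcT_eq[OF \<open>t \<in> I\<close>, of f' b' h2]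
    by (simp add: algebra_simps)
  also have "\<bar>\<dots>\<bar> \<le> \<bar>f t - f' t\<bar> + \<bar>Aco t\<bar> * (\<bar>h1 (tau t) - h2 (tau t)\<bar> + \<bar>b (tau t) - b' (tau t)\<bar>)"
    by (rule order.trans[OF abs_triangle_ineq]) (simp add: abs_mult mult_left_mono abs_triangle_ineq4)
  also have "\<dots> \<le> \<bar>f t - f' t\<bar> + L * (\<bar>h1 (tau t) - h2 (tau t)\<bar> + \<bar>b (tau t) - b' (tau t)\<bar>)"
    using elim(3) by (intro add_left_mono mult_right_mono) auto
  finally show ?case by (simp add: algebra_simps)
qed

lemma Lq_lt1: "0 < q \<Longrightarrow> L powr q < 1"
proof (cases "L = 0")
  case True then show ?thesis by simp
next
  case False
  assume q: "0 < q"
  then show ?thesis using False L_nonneg L_lt1 by (simp add: powr01_less_one)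
qed

lemma main_lt1:
  fixes D F B :: "real \<Rightarrow> real" and q :: real
  assumes q: "0 < q" "q \<le> 1"
    and Dm: "D \<in> borel_measurable M" and Fm: "F \<in> borel_measurable M" and Bm: "B \<in> borel_measurable M"
    and iD: "integrable M (\<lambda>t. \<bar>D t\<bar> powr q)" and iF: "integrable M (\<lambda>t. \<bar>F t\<bar> powr q)"
    and iB: "integrable M (\<lambda>t. \<bar>B t\<bar> powr q)"
    and ae: "AE t in M. \<bar>D t\<bar> \<le> \<bar>F t\<bar> + L * \<bar>D (tau t)\<bar> + L * \<bar>B (tau t)\<bar>"
  shows "(\<integral>t. \<bar>D t\<bar> powr q \<partial>M) \<le> 1 / (1 - L powr q) * ((\<integral>t. \<bar>F t\<bar> powr q \<partial>M) + L powr q * (\<integral>t. \<bar>B t\<bar> powr q \<partial>M))"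
proof -
  have [measurable]: "D \<in> borel_measurable M" "F \<in> borel_measurable M" "B \<in> borel_measurable M"
    by (rule Dm, rule Fm, rule Bm)
  have cD: "integrable M (\<lambda>t. \<bar>D (tau t)\<bar> powr q)" "(\<integral>t. \<bar>D (tau t)\<bar> powr q \<partial>M) = (\<integral>t. \<bar>D t\<bar> powr q \<partial>M)"
    using CVB[of "\<lambda>t. \<bar>D t\<bar> powr q", OF _ iD] by auto
  have cB: "integrable M (\<lambda>t. \<bar>B (tau t)\<bar> powr q)" "(\<integral>t. \<bar>B (tau t)\<bar> powr q \<partial>M) = (\<integral>t. \<bar>B t\<bar> powr q \<partial>M)"
    using CVB[of "\<lambda>t. \<bar>B t\<bar> powr q", OF _ iB] by auto
  define nD where "nD = (\<integral>t. \<bar>D t\<bar> powr q \<partial>M)"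
  define nF where "nF = (\<integral>t. \<bar>F t\<bar> powr q \<partial>M)"
  define nB where "nB = (\<integral>t. \<bar>B t\<bar> powr q \<partial>M)"
  define Lq where "Lq = L powr q"
  have "nD \<le> (\<integral>t. \<bar>F t\<bar> powr q + Lq * \<bar>D (tau t)\<bar> powr q + Lq * \<bar>B (tau t)\<bar> powr q \<partial>M)"
    unfolding nD_def
  proof (rule integral_mono_AE[OF iD])
    show "integrable M (\<lambda>t. \<bar>F t\<bar> powr q + Lq * \<bar>D (tau t)\<bar> powr q + Lq * \<bar>B (tau t)\<bar> powr q)"
      using iF cD(1) cB(1) by (intro Bochner_Integration.integrable_add integrable_mult_right)
    show "AE t in M. \<bar>D t\<bar> powr q \<le> \<bar>F t\<bar> powr q + Lq * \<bar>D (tau t)\<bar> powr q + Lq * \<bar>B (tau t)\<bar> powr q"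
      using ae
    proof eventually_elim
      case (elim t)
      have "\<bar>D t\<bar> powr q \<le> (\<bar>F t\<bar> + (L * \<bar>D (tau t)\<bar> + L * \<bar>B (tau t)\<bar>)) powr q"
        using elim q by (intro powr_mono2) (auto simp: add.assoc)
      also have "\<dots> \<le> \<bar>F t\<bar> powr q + (L * \<bar>D (tau t)\<bar> + L * \<bar>B (tau t)\<bar>) powr q"
        using q L_nonneg by (intro subadd) auto
      also have "(L * \<bar>D (tau t)\<bar> + L * \<bar>B (tau t)\<bar>) powr q \<le> (L * \<bar>D (tau t)\<bar>) powr q + (L * \<bar>B (tau t)\<bar>) powr q"
        using q L_nonneg by (intro subadd) auto
      also have "(L * \<bar>D (tau t)\<bar>) powr q = Lq * \<bar>D (tau t)\<bar> powr q" using L_nonneg by (simp add: powr_mult Lq_def)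
      also have "(L * \<bar>B (tau t)\<bar>) powr q = Lq * \<bar>B (tau t)\<bar> powr q" using L_nonneg by (simp add: powr_mult Lq_def)
      finally show ?case by simp
    qed
  qed
  also have "\<dots> = nF + Lq * nD + Lq * nB"
    using iF cD cB by (simp add: nF_def nD_def nB_def)
  finally have "nD \<le> nF + Lq * nD + Lq * nB" .
  then have "nD * (1 - Lq) \<le> nF + Lq * nB" by (simp add: algebra_simps)
  moreover have "0 < 1 - Lq" using Lq_lt1[OF q(1)] by (simp add: Lq_def)
  ultimately have "nD \<le> (nF + Lq * nB) / (1 - Lq)" by (simp add: pos_le_divide_eq)
  then show ?thesis by (simp add: nD_def nF_def nB_def Lq_def)
qed

lemma main_inf:
  fixes D F B :: "real \<Rightarrow> real"
  assumes Dm: "D \<in> borel_measurable M" and Fm: "F \<in> borel_measurable M" and Bm: "B \<in> borel_measurable M"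
    and eD: "esssup M (\<lambda>t. ereal \<bar>D t\<bar>) < \<infinity>" and eF: "esssup M (\<lambda>t. ereal \<bar>F t\<bar>) < \<infinity>"
    and eB: "esssup M (\<lambda>t. ereal \<bar>B t\<bar>) < \<infinity>"
    and ae: "AE t in M. \<bar>D t\<bar> \<le> \<bar>F t\<bar> + L * \<bar>D (tau t)\<bar> + L * \<bar>B (tau t)\<bar>"
  shows "real_of_ereal (esssup M (\<lambda>t. ereal \<bar>D t\<bar>)) \<le> 1 / (1 - L) *
     (real_of_ereal (esssup M (\<lambda>t. ereal \<bar>F t\<bar>)) + L * real_of_ereal (esssup M (\<lambda>t. ereal \<bar>B t\<bar>)))"
proof -
  have [measurable]: "D \<in> borel_measurable M" by (rule Dm)
  define nD where "nD = real_of_ereal (esssup M (\<lambda>t. ereal \<bar>D t\<bar>))"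
  define nF where "nF = real_of_ereal (esssup M (\<lambda>t. ereal \<bar>F t\<bar>))"
  define nB where "nB = real_of_ereal (esssup M (\<lambda>t. ereal \<bar>B t\<bar>))"
  have aD: "AE t in M. \<bar>D (tau t)\<bar> \<le> nD" using AT[OF ess_fin(3)[OF Dm eD]] by (simp add: nD_def)
  have aB: "AE t in M. \<bar>B (tau t)\<bar> \<le> nB" using AT[OF ess_fin(3)[OF Bm eB]] by (simp add: nB_def)
  have aF: "AE t in M. \<bar>F t\<bar> \<le> nF" using ess_fin(3)[OF Fm eF] by (simp add: nF_def)
  have "esssup M (\<lambda>t. ereal \<bar>D t\<bar>) \<le> ereal (nF + L * nD + L * nB)"
  proof (rule esssup_I)
    show "(\<lambda>t. ereal \<bar>D t\<bar>) \<in> borel_measurable M" by measurable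
    show "AE t in M. ereal \<bar>D t\<bar> \<le> ereal (nF + L * nD + L * nB)"
      using ae aD aB aF
    proof eventually_elim
      case (elim t)
      have "L * \<bar>D (tau t)\<bar> \<le> L * nD" "L * \<bar>B (tau t)\<bar> \<le> L * nB"
        using elim L_nonneg by (auto intro: mult_left_mono)
      then show ?case using elim by simp
    qed
  qed
  moreover have e1: "esssup M (\<lambda>t. ereal \<bar>D t\<bar>) = ereal nD"
    unfolding nD_def by (rule ess_fin(1)[OF Dm eD])
  ultimately have "ereal nD \<le> ereal (nF + L * nD + L * nB)" by simp
  then have "nD \<le> nF + L * nD + L * nB" by simp
  then have "nD * (1 - L) \<le> nF + L * nB" by (simp add: algebra_simps)
  moreover have "0 < 1 - L" using L_lt1 by simp
  ultimately have "nD \<le> (nF + L * nB) / (1 - L)" by (simp add: pos_le_divide_eq)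
  then show ?thesis by (simp add: nD_def nF_def nB_def)
qed

end


context fcfull begin

lemma mink:
  fixes u v w :: "real \<Rightarrow> real" and q :: real
  assumes q: "1 \<le> q" and um: "u \<in> borel_measurable M" and vm: "v \<in> borel_measurable M"
    and wm: "w \<in> borel_measurable M"
    and iu: "integrable M (\<lambda>t. \<bar>u t\<bar> powr q)" and iv: "integrable M (\<lambda>t. \<bar>v t\<bar> powr q)"
    and ae: "AE t in M. \<bar>w t\<bar> \<le> \<bar>u t\<bar> + \<bar>v t\<bar>"
  shows "integrable M (\<lambda>t. \<bar>w t\<bar> powr q)"
    and "(\<integral>t. \<bar>w t\<bar> powr q \<partial>M) powr (1 / q) \<le> (\<integral>t. \<bar>u t\<bar> powr q \<partial>M) powr (1 / q) + (\<integral>t. \<bar>v t\<bar> powr q \<partial>M) powr (1 / q)"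
proof -
  have q0: "0 < q" using q by simp
  show iw: "integrable M (\<lambda>t. \<bar>w t\<bar> powr q)" by (rule int_diff[OF q0 um vm iu iv wm ae])
  define U where "U = (\<integral>t. \<bar>u t\<bar> powr q \<partial>M)"
  define V where "V = (\<integral>t. \<bar>v t\<bar> powr q \<partial>M)"
  define W where "W = (\<integral>t. \<bar>w t\<bar> powr q \<partial>M)"
  define a where "a = U powr (1 / q)"
  define b where "b = V powr (1 / q)"
  have U0: "0 \<le> U" and V0: "0 \<le> V" and W0: "0 \<le> W" by (simp_all add: U_def V_def W_def)
  have a0: "0 \<le> a" and b0: "0 \<le> b" by (simp_all add: a_def b_def)
  have rt: "(y powr (1 / q)) powr q = y" if "0 \<le> y" for y :: real
  proof -
    have "(y powr (1 / q)) powr q = y powr ((1 / q) * q)" by (rule powr_powr)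
    also have "(1 / q) * q = 1" using q0 by simp
    finally show ?thesis using that by simp
  qed
  have aq: "a powr q = U" using rt[OF U0] by (simp add: a_def)
  have bq: "b powr q = V" using rt[OF V0] by (simp add: b_def)
  have zero_case: "AE t in M. u t = 0"
    if z: "(\<integral>t. \<bar>u t\<bar> powr q \<partial>M) = 0" and iu: "integrable M (\<lambda>t. \<bar>u t\<bar> powr q)"
    for u :: "real \<Rightarrow> real"
  proof -
    have "AE t in M. \<bar>u t\<bar> powr q = 0"
      using integral_nonneg_eq_0_iff_AE[OF iu] z by simp
    then show ?thesis by eventually_elim simp
  qed
  have key: "W \<le> (a + b) powr q"
  proof (cases "a = 0 \<or> b = 0")
    case True
    then show ?thesis
    proof
      assume "a = 0"
      then have "U = 0" using U0 by (simp add: a_def)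
      then have "AE t in M. u t = 0" using zero_case[OF _ iu] by (simp add: U_def)
      then have "AE t in M. \<bar>w t\<bar> powr q \<le> \<bar>v t\<bar> powr q" using ae
      proof eventually_elim
        case (elim t) then show ?case using q0 by (intro powr_mono2) auto
      qed
      then have "W \<le> V" unfolding W_def V_def
        by (intro integral_mono_AE[OF iw iv])
      then show ?thesis using bq \<open>a = 0\<close> by simp
    next
      assume "b = 0"
      then have "V = 0" using V0 by (simp add: b_def)
      then have "AE t in M. v t = 0" using zero_case[OF _ iv] by (simp add: V_def)
      then have "AE t in M. \<bar>w t\<bar> powr q \<le> \<bar>u t\<bar> powr q" using ae
      proof eventually_elim
        case (elim t) then show ?case using q0 by (intro powr_mono2) auto
      qed
      then have "W \<le> U" unfolding W_def U_def
        by (intro integral_mono_AE[OF iw iu])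
      then show ?thesis using aq \<open>b = 0\<close> by simp
    qed
  next
    case False
    then have ap: "0 < a" and bp: "0 < b" using a0 b0 by auto
    have "0 < a powr q" "0 < b powr q" using ap bp by simp_all
    then have Up: "0 < U" and Vp: "0 < V" using aq bq by simp_all
    define l where "l = a / (a + b)"
    have l0: "0 \<le> l" "l \<le> 1" using ap bp by (auto simp: l_def)
    have l1: "1 - l = b / (a + b)" using ap bp by (simp add: l_def field_simps)
    define k1 where "k1 = l / U"
    define k2 where "k2 = (1 - l) / V"
    have "W \<le> (\<integral>t. (a + b) powr q * (k1 * \<bar>u t\<bar> powr q + k2 * \<bar>v t\<bar> powr q) \<partial>M)"
      unfolding W_def
    proof (rule integral_mono_AE[OF iw])
      show "integrable M (\<lambda>t. (a + b) powr q * (k1 * \<bar>u t\<bar> powr q + k2 * \<bar>v t\<bar> powr q))"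
        using iu iv by (intro integrable_mult_right Bochner_Integration.integrable_add)
      show "AE t in M. \<bar>w t\<bar> powr q \<le> (a + b) powr q * (k1 * \<bar>u t\<bar> powr q + k2 * \<bar>v t\<bar> powr q)"
        using ae
      proof eventually_elim
        case (elim t)
        define X where "X = \<bar>u t\<bar> / a"
        define Y where "Y = \<bar>v t\<bar> / b"
        have X0: "0 \<le> X" and Y0: "0 \<le> Y" using ap bp by (simp_all add: X_def Y_def)
        have lx: "l * X = \<bar>u t\<bar> / (a + b)" using ap bp by (simp add: l_def X_def)
        have ly: "(1 - l) * Y = \<bar>v t\<bar> / (a + b)" using ap bp unfolding l1 by (simp add: Y_def)
        have "(a + b) * (\<bar>u t\<bar> / (a + b) + \<bar>v t\<bar> / (a + b)) = \<bar>u t\<bar> + \<bar>v t\<bar>"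
          using ap bp by (simp add: add_divide_distrib[symmetric])
        then have id: "\<bar>u t\<bar> + \<bar>v t\<bar> = (a + b) * (l * X + (1 - l) * Y)"
          unfolding lx ly by simp
        have "\<bar>w t\<bar> powr q \<le> ((a + b) * (l * X + (1 - l) * Y)) powr q"
          using elim q0 id by (intro powr_mono2) auto
        also have "\<dots> = (a + b) powr q * (l * X + (1 - l) * Y) powr q"
          by (rule powr_mult)
        also have "\<dots> \<le> (a + b) powr q * (l * X powr q + (1 - l) * Y powr q)"
          using cvx[OF q X0 Y0 l0] by (intro mult_left_mono) auto
        also have "X powr q = \<bar>u t\<bar> powr q / U" unfolding X_def using ap aq by (simp add: powr_divide)
        also have "Y powr q = \<bar>v t\<bar> powr q / V" unfolding Y_def using bp bq by (simp add: powr_divide)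
        finally show ?case by (simp add: k1_def k2_def)
      qed
    qed
    also have "\<dots> = (a + b) powr q * (k1 * U + k2 * V)"
      using iu iv by (simp add: U_def V_def)
    also have "k1 * U + k2 * V = 1" using Up Vp by (simp add: k1_def k2_def)
    finally show ?thesis by simp
  qed
  have "W powr (1 / q) \<le> ((a + b) powr q) powr (1 / q)" using key W0 q0 by (intro powr_mono2) auto
  also have "\<dots> = a + b" using a0 b0 q0 by (intro powr_inv) auto
  finally show "(\<integral>t. \<bar>w t\<bar> powr q \<partial>M) powr (1 / q) \<le> (\<integral>t. \<bar>u t\<bar> powr q \<partial>M) powr (1 / q) + (\<integral>t. \<bar>v t\<bar> powr q \<partial>M) powr (1 / q)"
    by (simp add: W_def a_def b_def U_def V_def)
qed

lemma scale_norm: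
  fixes g :: "real \<Rightarrow> real" and q :: real
  assumes q: "0 < q" and gm: "g \<in> borel_measurable M" and ig: "integrable M (\<lambda>t. \<bar>g t\<bar> powr q)"
  shows "integrable M (\<lambda>t. \<bar>L * g (tau t)\<bar> powr q)"
    and "(\<integral>t. \<bar>L * g (tau t)\<bar> powr q \<partial>M) powr (1 / q) = L * (\<integral>t. \<bar>g t\<bar> powr q \<partial>M) powr (1 / q)"
proof -
  have [measurable]: "g \<in> borel_measurable M" by (rule gm)
  have c: "integrable M (\<lambda>t. \<bar>g (tau t)\<bar> powr q)" "(\<integral>t. \<bar>g (tau t)\<bar> powr q \<partial>M) = (\<integral>t. \<bar>g t\<bar> powr q \<partial>M)"
    using CVB[of "\<lambda>t. \<bar>g t\<bar> powr q", OF _ ig] by auto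
  have e: "\<bar>L * g (tau t)\<bar> powr q = L powr q * \<bar>g (tau t)\<bar> powr q" for t
    using L_nonneg by (simp add: abs_mult powr_mult)
  show "integrable M (\<lambda>t. \<bar>L * g (tau t)\<bar> powr q)" unfolding e using c(1) by (rule integrable_mult_right)
  have "(\<integral>t. \<bar>L * g (tau t)\<bar> powr q \<partial>M) = L powr q * (\<integral>t. \<bar>g t\<bar> powr q \<partial>M)"
    unfolding e using c by simp
  then have "(\<integral>t. \<bar>L * g (tau t)\<bar> powr q \<partial>M) powr (1 / q) = (L powr q) powr (1 / q) * (\<integral>t. \<bar>g t\<bar> powr q \<partial>M) powr (1 / q)"
    by (simp add: powr_mult)
  also have "(L powr q) powr (1 / q) = L" using L_nonneg q by (rule powr_inv)
  finally show "(\<integral>t. \<bar>L * g (tau t)\<bar> powr q \<partial>M) powr (1 / q) = L * (\<integral>t. \<bar>g t\<bar> powr q \<partial>M) powr (1 / q)" .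
qed

lemma main_ge1:
  fixes D F B :: "real \<Rightarrow> real" and q :: real
  assumes q: "1 \<le> q"
    and Dm: "D \<in> borel_measurable M" and Fm: "F \<in> borel_measurable M" and Bm: "B \<in> borel_measurable M"
    and iD: "integrable M (\<lambda>t. \<bar>D t\<bar> powr q)" and iF: "integrable M (\<lambda>t. \<bar>F t\<bar> powr q)"
    and iB: "integrable M (\<lambda>t. \<bar>B t\<bar> powr q)"
    and ae: "AE t in M. \<bar>D t\<bar> \<le> \<bar>F t\<bar> + L * \<bar>D (tau t)\<bar> + L * \<bar>B (tau t)\<bar>"
  shows "(\<integral>t. \<bar>D t\<bar> powr q \<partial>M) powr (1 / q) \<le> 1 / (1 - L) * ((\<integral>t. \<bar>F t\<bar> powr q \<partial>M) powr (1 / q) + L * (\<integral>t. \<bar>B t\<bar> powr q \<partial>M) powr (1 / q))"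
proof -
  have q0: "0 < q" using q by simp
  have [measurable]: "D \<in> borel_measurable M" "F \<in> borel_measurable M" "B \<in> borel_measurable M"
    by (rule Dm, rule Fm, rule Bm)
  have Dtm[measurable]: "(\<lambda>t. D (tau t)) \<in> borel_measurable M" using measurable_compose[OF tau_meas Dm] .
  have Btm[measurable]: "(\<lambda>t. B (tau t)) \<in> borel_measurable M" using measurable_compose[OF tau_meas Bm] .
  define G where "G t = L * \<bar>D (tau t)\<bar> + L * \<bar>B (tau t)\<bar>" for t
  have Gm: "G \<in> borel_measurable M" unfolding G_def by measurable
  have u1m: "(\<lambda>t. L * D (tau t)) \<in> borel_measurable M" by measurable
  have v1m: "(\<lambda>t. L * B (tau t)) \<in> borel_measurable M" by measurable
  note sD = scale_norm[OF q0 Dm iD]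
  note sB = scale_norm[OF q0 Bm iB]
  have aeG: "AE t in M. \<bar>G t\<bar> \<le> \<bar>L * D (tau t)\<bar> + \<bar>L * B (tau t)\<bar>"
    using L_nonneg by (auto simp: G_def abs_mult)
  note mG = mink[OF q u1m v1m Gm sD(1) sB(1) aeG]
  have aeD: "AE t in M. \<bar>D t\<bar> \<le> \<bar>F t\<bar> + \<bar>G t\<bar>"
    using ae by eventually_elim (use L_nonneg in \<open>simp add: G_def\<close>)
  note mD = mink[OF q Fm Gm Dm iF mG(1) aeD]
  define nD where "nD = (\<integral>t. \<bar>D t\<bar> powr q \<partial>M) powr (1 / q)"
  define nF where "nF = (\<integral>t. \<bar>F t\<bar> powr q \<partial>M) powr (1 / q)"
  define nB where "nB = (\<integral>t. \<bar>B t\<bar> powr q \<partial>M) powr (1 / q)"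
  have "nD \<le> nF + (L * nD + L * nB)"
    using mD(2) mG(2) sD(2) sB(2) by (simp add: nD_def nF_def nB_def)
  then have "nD * (1 - L) \<le> nF + L * nB" by (simp add: algebra_simps)
  moreover have "0 < 1 - L" using L_lt1 by simp
  ultimately have "nD \<le> (nF + L * nB) / (1 - L)" by (simp add: pos_le_divide_eq)
  then show ?thesis by (simp add: nD_def nF_def nB_def)
qed

end


theorem corollary3p5:
  fixes x :: "nat \<Rightarrow> real" and N :: nat and \<alpha> :: "nat \<Rightarrow> real \<Rightarrow> real"
    and p :: ennreal and f f' b b' :: "real \<Rightarrow> real"
  assumes "N \<ge> 2"
    and "strict_mono_on {0..N} x"
    and "\<And>n. n \<in> {1..N} \<Longrightarrow> \<alpha> n \<in> borel_measurable (lebesgue_on (Ival x N))"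
    and "Lam x N \<alpha> < 1"
    and "0 < p"
    and "memLp (Ival x N) p f" and "memLp (Ival x N) p f'"
    and "memLp (Ival x N) p b" and "memLp (Ival x N) p b'"
  shows "(1 \<le> p \<longrightarrow>
           Lp_norm (Ival x N) p (\<lambda>t. frac_conv x N \<alpha> p f b t - frac_conv x N \<alpha> p f' b' t)
             \<le> 1 / (1 - real_of_ereal (Lam x N \<alpha>)) *
               (Lp_norm (Ival x N) p (\<lambda>t. f t - f' t)
                + real_of_ereal (Lam x N \<alpha>) * Lp_norm (Ival x N) p (\<lambda>t. b t - b' t)))
       \<and> (p < 1 \<longrightarrow>
           dp (Ival x N) (enn2real p) (frac_conv x N \<alpha> p f b) (frac_conv x N \<alpha> p f' b')
             \<le> 1 / (1 - real_of_ereal (Lam x N \<alpha>) powr enn2real p) *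
               (dp (Ival x N) (enn2real p) f f'
                + real_of_ereal (Lam x N \<alpha>) powr enn2real p * dp (Ival x N) (enn2real p) b b'))"
proof -
  interpret fcfull x N \<alpha>
    using assms(1-4) by unfold_locales auto
  have p: "0 < p" by (rule assms(5))
  have mf: "memLp I p f" and mf': "memLp I p f'" and mb: "memLp I p b" and mb': "memLp I p b'"
    using assms(6-9) by auto
  define h1 where "h1 = frac_conv x N \<alpha> p f b"
  define h2 where "h2 = frac_conv x N \<alpha> p f' b'"
  have P1: "memLp I p h1" "AE t in M. fcT x N \<alpha> f b h1 t = h1 t"
    using fc_prop[OF p mf mb] by (auto simp: h1_def)
  have P2: "memLp I p h2" "AE t in M. fcT x N \<alpha> f' b' h2 t = h2 t"
    using fc_prop[OF p mf' mb'] by (auto simp: h2_def)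
  have Lr: "real_of_ereal (Lam x N \<alpha>) = L" by (simp add: L_def)
  define D where "D t = h1 t - h2 t" for t
  define F where "F t = f t - f' t" for t
  define B where "B t = b t - b' t" for t
  have ae: "AE t in M. \<bar>D t\<bar> \<le> \<bar>F t\<bar> + L * \<bar>D (tau t)\<bar> + L * \<bar>B (tau t)\<bar>"
    using key_ae[OF P1(2) P2(2)] by (simp add: D_def F_def B_def)
  have h1m: "h1 \<in> borel_measurable M" and h2m: "h2 \<in> borel_measurable M"
    using P1(1) P2(1) by (simp_all add: memLp_meas)
  have fm: "f \<in> borel_measurable M" "f' \<in> borel_measurable M" "b \<in> borel_measurable M" "b' \<in> borel_measurable M"
    using mf mf' mb mb' by (simp_all add: memLp_meas)
  have Dm: "D \<in> borel_measurable M" unfolding D_def using h1m h2m by simp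
  have Fm: "F \<in> borel_measurable M" unfolding F_def using fm by simp
  have Bm: "B \<in> borel_measurable M" unfolding B_def using fm by simp
  have fin: "p \<noteq> \<infinity> \<Longrightarrow> 0 < enn2real p" using p by (simp add: enn2real_positive_iff less_top)
  have ints: "integrable M (\<lambda>t. \<bar>D t\<bar> powr enn2real p) \<and> integrable M (\<lambda>t. \<bar>F t\<bar> powr enn2real p)
       \<and> integrable M (\<lambda>t. \<bar>B t\<bar> powr enn2real p)" if pinf: "p \<noteq> \<infinity>"
  proof -
    have q: "0 < enn2real p" by (rule fin[OF pinf])
    have i: "integrable M (\<lambda>t. \<bar>g t\<bar> powr enn2real p)" if "memLp I p g" for g
      using that pinf by (simp add: memLp_def)
    have ae3: "AE t in M. \<bar>u t - v t\<bar> \<le> \<bar>u t\<bar> + \<bar>v t\<bar>" for u v :: "real \<Rightarrow> real" by simp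
    show ?thesis unfolding D_def F_def B_def
      using int_diff[OF q h1m h2m i[OF P1(1)] i[OF P2(1)] _ ae3] int_diff[OF q fm(1,2) i[OF mf] i[OF mf'] _ ae3]
        int_diff[OF q fm(3,4) i[OF mb] i[OF mb'] _ ae3] h1m h2m fm by auto
  qed
  show ?thesis
  proof (intro conjI impI)
    assume p1: "1 \<le> p"
    show "Lp_norm (Ival x N) p (\<lambda>t. frac_conv x N \<alpha> p f b t - frac_conv x N \<alpha> p f' b' t)
             \<le> 1 / (1 - real_of_ereal (Lam x N \<alpha>)) *
               (Lp_norm (Ival x N) p (\<lambda>t. f t - f' t)
                + real_of_ereal (Lam x N \<alpha>) * Lp_norm (Ival x N) p (\<lambda>t. b t - b' t))"
    proof (cases "p = \<infinity>")
      case True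
      have e: "esssup M (\<lambda>t. ereal \<bar>g t\<bar>) < \<infinity>" if "memLp I p g" for g
        using that True by (simp add: memLp_def)
      have eD: "esssup M (\<lambda>t. ereal \<bar>D t\<bar>) < \<infinity>" unfolding D_def by (rule ess_diff[OF h1m h2m e[OF P1(1)] e[OF P2(1)]])
      have eF: "esssup M (\<lambda>t. ereal \<bar>F t\<bar>) < \<infinity>" unfolding F_def by (rule ess_diff[OF fm(1,2) e[OF mf] e[OF mf']])
      have eB: "esssup M (\<lambda>t. ereal \<bar>B t\<bar>) < \<infinity>" unfolding B_def by (rule ess_diff[OF fm(3,4) e[OF mb] e[OF mb']])
      show ?thesis using main_inf[OF Dm Fm Bm eD eF eB ae] True
        by (simp add: Lp_norm_def Lr D_def F_def B_def h1_def h2_def)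
    next
      case False
      have q1: "1 \<le> enn2real p"
        using enn2real_mono[OF p1] False by (simp add: less_top)
      show ?thesis using main_ge1[OF q1 Dm Fm Bm ints[OF False, THEN conjunct1] ints[OF False, THEN conjunct2, THEN conjunct1]
          ints[OF False, THEN conjunct2, THEN conjunct2] ae] False
        by (simp add: Lp_norm_def Lr D_def F_def B_def h1_def h2_def)
    qed
  next
    assume p1: "p < 1"
    have False': "p \<noteq> \<infinity>" using p1 by auto
    have q0: "0 < enn2real p" by (rule fin[OF False'])
    have q1: "enn2real p \<le> 1"
      using enn2real_mono[of p 1] p1 by simp
    show "dp (Ival x N) (enn2real p) (frac_conv x N \<alpha> p f b) (frac_conv x N \<alpha> p f' b')
             \<le> 1 / (1 - real_of_ereal (Lam x N \<alpha>) powr enn2real p) *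
               (dp (Ival x N) (enn2real p) f f'
                + real_of_ereal (Lam x N \<alpha>) powr enn2real p * dp (Ival x N) (enn2real p) b b')"
      using main_lt1[OF q0 q1 Dm Fm Bm ints[OF False', THEN conjunct1] ints[OF False', THEN conjunct2, THEN conjunct1]
          ints[OF False', THEN conjunct2, THEN conjunct2] ae]
      by (simp add: dp_def Lr D_def F_def B_def h1_def h2_def)
  qed
qed


end
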